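(* Let $p,q\in(1,\infty)$ and $p'=\frac p{p-1}$. Then the Laplace transform $L:L^{p,q}(0,\infty)\to L^{p',q}(0,\infty)$ is not strictly singular.
   Context: Laplace transform: $Lf(t)=\int_0^\infty f(s)e^{-ts}\,ds$, $t\in(0,\infty)$; it is bounded $L^{p,q}(0,\infty)\to L^{p',q}(0,\infty)$. Lorentz space $L^{p,q}(0,\infty)$: measurable $f$ with $\|f\|_{p,q}=\big(\int_0^\infty(t^{1/p}f^*(t))^q\frac{dt}t\big)^{1/q}<\infty$, $f^*$ the nonincreasing rearrangement. A bounded linear operator $T:X\to Y$ is strictly singular if there is no infinite-dimensional subspace $Z\subseteq X$ such that $T|_Z$ is an isomorphism onto $T(Z)$. *)

theory Defs
  imports "HOL-Analysis.Analysis"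
begin

text \<open>All functions are real-valued and only their values on (0,infinity) matter.\<close>

definition pos_measure :: "real measure" where
  "pos_measure = restrict_space lborel {0<..}"

definition distrib_fun :: "(real \<Rightarrow> real) \<Rightarrow> ennreal \<Rightarrow> ennreal" where
  "distrib_fun f s = emeasure lborel {x. 0 < x \<and> s < ennreal \<bar>f x\<bar>}"

definition rearr :: "(real \<Rightarrow> real) \<Rightarrow> real \<Rightarrow> ennreal" where
  "rearr f t = Inf {s::ennreal. distrib_fun f s \<le> ennreal t}"

definition lorentz_integral :: "real \<Rightarrow> real \<Rightarrow> (real \<Rightarrow> real) \<Rightarrow> ennreal" where
  "lorentz_integral p q f =
     (\<integral>\<^sup>+ t. indicator {0<..} t *
        (if rearr f t = \<infinity> then \<infinity>
         else ennreal ((t powr (1/p) * enn2real (rearr f t)) powr q / t)) \<partial>lborel)"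

definition lorentz_norm :: "real \<Rightarrow> real \<Rightarrow> (real \<Rightarrow> real) \<Rightarrow> real" where
  "lorentz_norm p q f = enn2real (lorentz_integral p q f) powr (1/q)"

definition lorentz_space :: "real \<Rightarrow> real \<Rightarrow> (real \<Rightarrow> real) set" where
  "lorentz_space p q = {f. f \<in> borel_measurable pos_measure \<and> lorentz_integral p q f < \<infinity>}"

definition laplace :: "(real \<Rightarrow> real) \<Rightarrow> real \<Rightarrow> real" where
  "laplace f t = (LINT s:{0<..}|lborel. f s * exp (- t * s))"

text \<open>Linear subspaces of a function space and infinite dimensionality, where functions
  are identified when they agree almost everywhere on (0,infinity).\<close>
definition fun_subspace :: "(real \<Rightarrow> real) set \<Rightarrow> bool" where
  "fun_subspace Z \<longleftrightarrow> (\<lambda>x. 0) \<in> Z \<and>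
     (\<forall>f\<in>Z. \<forall>g\<in>Z. (\<lambda>x. f x + g x) \<in> Z) \<and> (\<forall>c. \<forall>f\<in>Z. (\<lambda>x. c * f x) \<in> Z)"

definition infinite_dim_ae :: "(real \<Rightarrow> real) set \<Rightarrow> bool" where
  "infinite_dim_ae Z \<longleftrightarrow> (\<forall>n::nat. \<exists>fs::nat \<Rightarrow> real \<Rightarrow> real. (\<forall>i<n. fs i \<in> Z) \<and>
      (\<forall>c::nat \<Rightarrow> real. (AE x in pos_measure. (\<Sum>i<n. c i * fs i x) = 0) \<longrightarrow> (\<forall>i<n. c i = 0)))"

text \<open>T : X \<rightarrow> Y (with quasinorms nX, nY) is strictly singular iff there is no infinite
  dimensional subspace Z of X such that T restricted to Z is an isomorphism onto T(Z).\<close>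
definition strictly_singular ::
  "(real \<Rightarrow> real) set \<Rightarrow> ((real \<Rightarrow> real) \<Rightarrow> real) \<Rightarrow> (real \<Rightarrow> real) set \<Rightarrow> ((real \<Rightarrow> real) \<Rightarrow> real)
     \<Rightarrow> ((real \<Rightarrow> real) \<Rightarrow> (real \<Rightarrow> real)) \<Rightarrow> bool" where
  "strictly_singular X nX Y nY T \<longleftrightarrow>
     \<not> (\<exists>Z. Z \<subseteq> X \<and> fun_subspace Z \<and> infinite_dim_ae Z \<and> (\<forall>f\<in>Z. T f \<in> Y) \<and>
          (\<exists>c>0. \<exists>C. \<forall>f\<in>Z. c * nX f \<le> nY (T f) \<and> nY (T f) \<le> C * nX f))"

end

theory Submission
  imports Defs
begin



lemma space_pos_measure[simp]: "space pos_measure = {0<..}"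
  by (simp add: pos_measure_def space_restrict_space)

lemma distrib_fun_cong:
  assumes "\<And>x. 0 < x \<Longrightarrow> f x = g x"
  shows "distrib_fun f = distrib_fun g"
proof
  fix s
  have "{x. 0 < x \<and> s < ennreal \<bar>f x\<bar>} = {x. 0 < x \<and> s < ennreal \<bar>g x\<bar>}"
    using assms by auto
  then show "distrib_fun f s = distrib_fun g s" unfolding distrib_fun_def by simp
qed

lemma lorentz_cong:
  assumes "\<And>x. 0 < x \<Longrightarrow> f x = g x"
  shows "lorentz_integral p q f = lorentz_integral p q g"
    "lorentz_norm p q f = lorentz_norm p q g"
    "f \<in> lorentz_space p q \<longleftrightarrow> g \<in> lorentz_space p q"
proof -
  have r: "rearr f = rearr g"
    by (simp add: rearr_def[abs_def] distrib_fun_cong[OF assms])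
  show 1: "lorentz_integral p q f = lorentz_integral p q g"
    unfolding lorentz_integral_def r ..
  show "lorentz_norm p q f = lorentz_norm p q g"
    unfolding lorentz_norm_def 1 ..
  have "f \<in> borel_measurable pos_measure \<longleftrightarrow> g \<in> borel_measurable pos_measure"
    by (rule measurable_cong) (simp add: assms)
  then show "f \<in> lorentz_space p q \<longleftrightarrow> g \<in> lorentz_space p q"
    unfolding lorentz_space_def using 1 by simp
qed

lemma rearr_upper:
  assumes H: "\<And>x y. 0 < x \<Longrightarrow> x \<le> y \<Longrightarrow> H y \<le> H x"
    and le: "\<And>x. 0 < x \<Longrightarrow> \<bar>g x\<bar> \<le> H x" and t: "0 < t"
  shows "rearr g t \<le> ennreal (H t)"
proof -
  have Ht: "0 \<le> H t" using le[OF t] by linarith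
  have sub: "{x. 0 < x \<and> ennreal (H t) < ennreal \<bar>g x\<bar>} \<subseteq> {0<..<t}"
  proof
    fix x assume "x \<in> {x. 0 < x \<and> ennreal (H t) < ennreal \<bar>g x\<bar>}"
    then have x: "0 < x" and lt: "ennreal (H t) < ennreal \<bar>g x\<bar>" by auto
    have "H t < \<bar>g x\<bar>" using lt Ht by (simp add: ennreal_less_iff)
    then have "\<not> t \<le> x" using H[OF t] le[OF x] by force
    then show "x \<in> {0<..<t}" using x by auto
  qed
  have "distrib_fun g (ennreal (H t)) \<le> emeasure lborel {0<..<t}"
    unfolding distrib_fun_def by (rule emeasure_mono[OF sub]) auto
  also have "\<dots> = ennreal t" using t by simp
  finally show ?thesis unfolding rearr_def by (auto intro: Inf_lower)
qed

lemma rearr_lower: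
  assumes g: "g \<in> borel_measurable pos_measure"
    and A: "A \<subseteq> {0<..}" and v: "\<And>x. x \<in> A \<Longrightarrow> v \<le> \<bar>g x\<bar>"
    and t: "ennreal t < emeasure lborel A"
  shows "ennreal v \<le> rearr g t"
  unfolding rearr_def
proof (rule Inf_greatest)
  fix s assume "s \<in> {s. distrib_fun g s \<le> ennreal t}"
  then have s: "distrib_fun g s \<le> ennreal t" by simp
  show "ennreal v \<le> s"
  proof (rule ccontr)
    assume "\<not> ennreal v \<le> s"
    then have sv: "s < ennreal v" by simp
    have "{x \<in> space pos_measure. s < ennreal \<bar>g x\<bar>} \<in> sets pos_measure" using g by measurable
    then have meas: "{x. 0 < x \<and> s < ennreal \<bar>g x\<bar>} \<in> sets lborel"
      by (simp add: pos_measure_def sets_restrict_space_iff)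
    have "A \<subseteq> {x. 0 < x \<and> s < ennreal \<bar>g x\<bar>}"
    proof
      fix x assume x: "x \<in> A"
      have "s < ennreal \<bar>g x\<bar>" using sv v[OF x] ennreal_leI less_le_trans by blast
      then show "x \<in> {x. 0 < x \<and> s < ennreal \<bar>g x\<bar>}" using A x by auto
    qed
    then have "emeasure lborel A \<le> distrib_fun g s" unfolding distrib_fun_def by (rule emeasure_mono[OF _ meas])
    with s t show False by (meson leD order_trans)
  qed
qed



lemma lorentz_integral_upper:
  assumes R: "\<And>t. 0 < t \<Longrightarrow> rearr g t \<le> ennreal (H t)" and H0: "\<And>t. 0 < t \<Longrightarrow> 0 \<le> H t"
    and q: "0 < q"
  shows "lorentz_integral p q g \<le> (\<integral>\<^sup>+ t. indicator {0<..} t * ennreal ((t powr (1/p) * H t) powr q / t) \<partial>lborel)"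
  unfolding lorentz_integral_def
proof (rule nn_integral_mono)
  fix t :: real
  show "indicator {0<..} t * (if rearr g t = \<infinity> then \<infinity> else ennreal ((t powr (1/p) * enn2real (rearr g t)) powr q / t))
    \<le> indicator {0<..} t * ennreal ((t powr (1/p) * H t) powr q / t)"
  proof (cases "0 < t")
    case True
    have "rearr g t < \<infinity>" using R[OF True] by (rule le_less_trans) simp
    then have ne: "rearr g t \<noteq> \<infinity>" by simp
    have "enn2real (rearr g t) \<le> enn2real (ennreal (H t))"
      by (rule enn2real_mono[OF R[OF True]]) simp
    then have le: "enn2real (rearr g t) \<le> H t" using H0[OF True] by simp
    have "(t powr (1/p) * enn2real (rearr g t)) powr q \<le> (t powr (1/p) * H t) powr q"
      by (intro powr_mono2 mult_left_mono le) (use q in auto)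
    then have "(t powr (1/p) * enn2real (rearr g t)) powr q / t \<le> (t powr (1/p) * H t) powr q / t"
      using True by (simp add: divide_right_mono)
    then show ?thesis using ne True by (auto intro: ennreal_leI)
  qed simp
qed


lemma sum_indicator_disjoint:
  fixes F :: "nat \<Rightarrow> ennreal"
  assumes disj: "\<And>j k. j < N \<Longrightarrow> k < N \<Longrightarrow> j \<noteq> k \<Longrightarrow> J j \<inter> J k = {}"
    and le: "\<And>k. k < N \<Longrightarrow> t \<in> J k \<Longrightarrow> F k \<le> B"
  shows "(\<Sum>k<N. indicator (J k) t * F k) \<le> B"
proof (cases "\<exists>k<N. t \<in> J k")
  case True
  then obtain k where k: "k < N" "t \<in> J k" by auto
  have z: "\<forall>i\<in>{..<N} - {k}. indicator (J i) t * F i = 0"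
  proof
    fix i assume i: "i \<in> {..<N} - {k}"
    then have "t \<notin> J i" using disj[of i k] k by auto
    then show "indicator (J i) t * F i = 0" by simp
  qed
  have "(\<Sum>k<N. indicator (J k) t * F k) = (\<Sum>k\<in>{k}. indicator (J k) t * F k)"
    by (rule sum.mono_neutral_right[OF _ _ z]) (use k in auto)
  also have "\<dots> \<le> B" using k le by simp
  finally show ?thesis .
next
  case False
  then have "\<And>k. k \<in> {..<N} \<Longrightarrow> indicator (J k) t * F k = 0" by auto
  then have "(\<Sum>k<N. indicator (J k) t * F k) = 0" by (rule sum.neutral[rule_format]) 
  then show ?thesis by simp
qed


lemma lorentz_integral_lower:
  fixes N :: nat and v :: "nat \<Rightarrow> real"
  assumes disj: "\<And>j k. j < N \<Longrightarrow> k < N \<Longrightarrow> j \<noteq> k \<Longrightarrow> J j \<inter> J k = {}"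
    and J: "\<And>k. k < N \<Longrightarrow> J k \<subseteq> {0<..}" "\<And>k. k < N \<Longrightarrow> J k \<in> sets lborel"
    and R: "\<And>k t. k < N \<Longrightarrow> t \<in> J k \<Longrightarrow> ennreal (v k) \<le> rearr g t"
    and v: "\<And>k. 0 \<le> v k" and q: "0 < q"
  shows "(\<Sum>k<N. \<integral>\<^sup>+ t. indicator (J k) t * ennreal ((t powr (1/p) * v k) powr q / t) \<partial>lborel)
     \<le> lorentz_integral p q g"
proof -
  have "(\<Sum>k<N. \<integral>\<^sup>+ t. indicator (J k) t * ennreal ((t powr (1/p) * v k) powr q / t) \<partial>lborel)
     = (\<integral>\<^sup>+ t. (\<Sum>k<N. indicator (J k) t * ennreal ((t powr (1/p) * v k) powr q / t)) \<partial>lborel)"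
    by (rule nn_integral_sum[symmetric]) (use J in measurable)
  also have "\<dots> \<le> lorentz_integral p q g"
    unfolding lorentz_integral_def
  proof (rule nn_integral_mono)
    fix t :: real
    show "(\<Sum>k<N. indicator (J k) t * ennreal ((t powr (1/p) * v k) powr q / t)) \<le> indicator {0<..} t * (if rearr g t = \<infinity> then \<infinity>
      else ennreal ((t powr (1 / p) * enn2real (rearr g t)) powr q / t))"
    proof (rule sum_indicator_disjoint[OF disj])
    fix k assume k: "k < N" and t: "t \<in> J k"
    have t0: "0 < t" using J(1)[OF k] t by auto
    show "ennreal ((t powr (1/p) * v k) powr q / t) \<le> indicator {0<..} t * (if rearr g t = \<infinity> then \<infinity>
      else ennreal ((t powr (1 / p) * enn2real (rearr g t)) powr q / t))"
    proof (cases "rearr g t = \<infinity>")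
      case False
      have "enn2real (ennreal (v k)) \<le> enn2real (rearr g t)"
        by (rule enn2real_mono[OF R[OF k t]]) (use False in \<open>simp add: top.not_eq_extremum\<close>)
      then have "v k \<le> enn2real (rearr g t)" using v[of k] by simp
      then have "(t powr (1/p) * v k) powr q \<le> (t powr (1/p) * enn2real (rearr g t)) powr q"
        by (intro powr_mono2 mult_left_mono) (use q v in auto)
      then have "(t powr (1/p) * v k) powr q / t \<le> (t powr (1/p) * enn2real (rearr g t)) powr q / t"
        using t0 by (simp add: divide_right_mono)
      then show ?thesis using False t0 by (auto intro: ennreal_leI)
    qed (use t0 in auto)
    qed
  qed
  finally show ?thesis .
qed



lemma nn_integral_powr_interval:
  assumes a: "0 < a" "a \<le> b" and al: "0 < \<alpha>"
  shows "(\<integral>\<^sup>+ t. indicator {a..b} t * ennreal (t powr (\<alpha> - 1)) \<partial>lborel) = ennreal ((b powr \<alpha> - a powr \<alpha>) / \<alpha>)"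
proof -
  have "((\<lambda>t. t powr (\<alpha> - 1)) has_integral ((\<lambda>t. t powr \<alpha> / \<alpha>) b - (\<lambda>t. t powr \<alpha> / \<alpha>) a)) {a..b}"
  proof (rule fundamental_theorem_of_calculus[OF a(2)])
    fix x assume x: "x \<in> {a..b}"
    then have x0: "0 < x" using a by auto
    have "((\<lambda>t. t powr \<alpha> / \<alpha>) has_real_derivative (\<alpha> * x powr (\<alpha> - 1)) / \<alpha>) (at x within {a..b})"
      by (rule has_field_derivative_at_within, rule DERIV_cdivide, rule has_real_derivative_powr[OF x0])
    then show "((\<lambda>t. t powr \<alpha> / \<alpha>) has_vector_derivative x powr (\<alpha> - 1)) (at x within {a..b})"
      using al by (simp add: has_real_derivative_iff_has_vector_derivative)
  qed
  then have hi: "((\<lambda>t. indicator {a..b} t * t powr (\<alpha> - 1)) has_integral ((b powr \<alpha> - a powr \<alpha>) / \<alpha>)) UNIV"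
  proof -
    have e: "(\<lambda>t. indicator {a..b} t * t powr (\<alpha> - 1)) = (\<lambda>t. if t \<in> {a..b} then t powr (\<alpha> - 1) else 0)"
      by (auto simp: indicator_def)
    have "(b powr \<alpha> / \<alpha> - a powr \<alpha> / \<alpha>) = (b powr \<alpha> - a powr \<alpha>) / \<alpha>" by (simp add: diff_divide_distrib)
    then show ?thesis unfolding e has_integral_restrict_UNIV using \<open>((\<lambda>t. t powr (\<alpha> - 1)) has_integral _) {a..b}\<close> by simp
  qed
  have "(\<integral>\<^sup>+ t. indicator {a..b} t * ennreal (t powr (\<alpha> - 1)) \<partial>lborel)
      = (\<integral>\<^sup>+ t. ennreal (indicator {a..b} t * t powr (\<alpha> - 1)) \<partial>lborel)"
    by (intro nn_integral_cong) (auto simp: indicator_def)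
  also have "\<dots> = ennreal ((b powr \<alpha> - a powr \<alpha>) / \<alpha>)"
    by (rule nn_integral_has_integral_lborel[OF _ _ hi]) (auto simp: indicator_def)
  finally show ?thesis .
qed




lemma nn_integral_scale_dt:
  fixes \<gamma> :: "real \<Rightarrow> real"
  assumes \<gamma>[measurable]: "\<gamma> \<in> borel_measurable borel" and l: "0 < l"
  shows "(\<integral>\<^sup>+ t. indicator {0<..} t * ennreal (\<gamma> (l * t) / t) \<partial>lborel)
       = (\<integral>\<^sup>+ x. indicator {0<..} x * ennreal (\<gamma> x / x) \<partial>lborel)"
proof -
  let ?f = "\<lambda>x::real. indicator {0<..} x * ennreal (\<gamma> x / x)"
  have "(\<integral>\<^sup>+ x. ?f x \<partial>lborel) = ennreal \<bar>l\<bar> * (\<integral>\<^sup>+ x. ?f (0 + l * x) \<partial>lborel)"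
    by (rule nn_integral_real_affine) (use l in auto)
  also have "\<dots> = (\<integral>\<^sup>+ x. ennreal l * ?f (l * x) \<partial>lborel)"
    using l by (subst nn_integral_cmult) auto
  also have "\<dots> = (\<integral>\<^sup>+ t. indicator {0<..} t * ennreal (\<gamma> (l * t) / t) \<partial>lborel)"
  proof (rule nn_integral_cong)
    fix x :: real
    show "ennreal l * ?f (l * x) = indicator {0<..} x * ennreal (\<gamma> (l * x) / x)"
    proof (cases "0 < x")
      case True
      have "ennreal l * ennreal (\<gamma> (l * x) / (l * x)) = ennreal (l * (\<gamma> (l * x) / (l * x)))"
        by (rule ennreal_mult'[symmetric]) (use l in simp)
      also have "l * (\<gamma> (l * x) / (l * x)) = \<gamma> (l * x) / x" using l True by (simp add: field_simps)
      finally show ?thesis using True l by (simp add: indicator_def)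
    next
      case False
      then have "\<not> 0 < l * x" using l by (simp add: zero_less_mult_iff)
      then show ?thesis using False by (simp add: indicator_def)
    qed
  qed
  finally show ?thesis by simp
qed

lemma convex_powr_nonneg:
  assumes q: "1 \<le> q"
  shows "convex_on {0..} (\<lambda>x::real. x powr q)"
proof (rule convex_onI)
  show "convex {0::real..}" by simp
  fix t x y :: real assume t: "0 < t" "t < 1" and x: "x \<in> {0..}" and y: "y \<in> {0..}"
  show "((1 - t) *\<^sub>R x + t *\<^sub>R y) powr q \<le> (1 - t) * x powr q + t * y powr q"
  proof (cases "x = 0 \<or> y = 0")
    case True
    then show ?thesis
    proof
      assume x0: "x = 0"
      have "(t * y) powr q = t powr q * y powr q" using t y by (simp add: powr_mult)
      also have "\<dots> \<le> t * y powr q" using t q by (intro mult_right_mono powr_le_one_le) auto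
      finally show ?thesis using x0 by simp
    next
      assume y0: "y = 0"
      have "((1 - t) * x) powr q = (1 - t) powr q * x powr q" using t x by (simp add: powr_mult)
      also have "\<dots> \<le> (1 - t) * x powr q" using t q by (intro mult_right_mono powr_le_one_le) auto
      finally show ?thesis using y0 by simp
    qed
  next
    case False
    then have "x \<in> {0<..}" "y \<in> {0<..}" using x y by auto
    from convex_onD[OF powr_convex[OF q], of t x y] this t show ?thesis by simp
  qed
qed

lemma holder_sum:
  fixes a w :: "'i \<Rightarrow> real"
  assumes I: "finite I" and a: "\<And>i. i \<in> I \<Longrightarrow> 0 \<le> a i" and w: "\<And>i. i \<in> I \<Longrightarrow> 0 \<le> w i" and q: "1 \<le> q"
  shows "(\<Sum>i\<in>I. a i * w i) powr q \<le> (\<Sum>i\<in>I. w i) powr (q - 1) * (\<Sum>i\<in>I. a i powr q * w i)"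
proof (cases "(\<Sum>i\<in>I. w i) = 0")
  case True
  then have "\<forall>i\<in>I. w i = 0" using sum_nonneg_eq_0_iff[OF I] w by blast
  then show ?thesis by simp
next
  case False
  define W where "W = (\<Sum>i\<in>I. w i)"
  have W: "0 < W" using False w W_def by (metis order_le_less sum_nonneg)
  have Ine: "I \<noteq> {}" using False by auto
  have "(\<Sum>i\<in>I. (w i / W) *\<^sub>R a i) powr q \<le> (\<Sum>i\<in>I. (w i / W) * a i powr q)"
  proof (rule convex_on_sum[OF I Ine convex_powr_nonneg[OF q]])
    show "(\<Sum>i\<in>I. w i / W) = 1" using W by (simp add: W_def sum_divide_distrib[symmetric])
  qed (use w a W in auto)
  moreover have "(\<Sum>i\<in>I. (w i / W) *\<^sub>R a i) = (\<Sum>i\<in>I. a i * w i) / W"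
    by (simp add: sum_divide_distrib mult.commute)
  moreover have "(\<Sum>i\<in>I. (w i / W) * a i powr q) = (\<Sum>i\<in>I. a i powr q * w i) / W"
    by (simp add: sum_divide_distrib mult.commute)
  ultimately have "(\<Sum>i\<in>I. a i * w i) powr q / W powr q \<le> (\<Sum>i\<in>I. a i powr q * w i) / W"
    by (simp add: powr_divide sum_nonneg a w)
  then have "(\<Sum>i\<in>I. a i * w i) powr q \<le> (\<Sum>i\<in>I. a i powr q * w i) / W * W powr q"
    using W by (simp add: divide_le_eq)
  also have "\<dots> = W powr (q - 1) * (\<Sum>i\<in>I. a i powr q * w i)"
    using W by (simp add: powr_diff)
  finally show ?thesis unfolding W_def .
qed

lemma geo_abs_sum:
  fixes \<theta> :: real and m :: int and N :: nat
  assumes th: "0 < \<theta>" "\<theta> < 1"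
  shows "(\<Sum>j<N. \<theta> ^ nat \<bar>int j - m\<bar>) \<le> (1 + \<theta>) / (1 - \<theta>)"
proof -
  define A1 where "A1 = {j. j < N \<and> int j \<le> m}"
  define A2 where "A2 = {j. j < N \<and> m < int j}"
  have un: "{..<N} = A1 \<union> A2" and dis: "A1 \<inter> A2 = {}" and fin: "finite A1" "finite A2"
    by (auto simp: A1_def A2_def)
  have s1: "(\<Sum>j\<in>A1. \<theta> ^ nat \<bar>int j - m\<bar>) < 1 / (1 - \<theta>)"
  proof -
    have inj: "inj_on (\<lambda>j. nat (m - int j)) A1" by (auto simp: A1_def inj_on_def)
    have "(\<Sum>j\<in>A1. \<theta> ^ nat \<bar>int j - m\<bar>) = (\<Sum>j\<in>A1. \<theta> ^ nat (m - int j))"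
      by (rule sum.cong) (auto simp: A1_def abs_if)
    also have "\<dots> = (\<Sum>i\<in>(\<lambda>j. nat (m - int j)) ` A1. \<theta> ^ i)"
      by (simp add: sum.reindex[OF inj])
    also have "\<dots> < 1 / (1 - \<theta>)" by (rule geometric_sum_less) (use th fin in auto)
    finally show ?thesis .
  qed
  have s2: "(\<Sum>j\<in>A2. \<theta> ^ nat \<bar>int j - m\<bar>) \<le> \<theta> / (1 - \<theta>)"
  proof -
    have inj: "inj_on (\<lambda>j. nat (int j - m - 1)) A2" by (auto simp: A2_def inj_on_def)
    have "(\<Sum>j\<in>A2. \<theta> ^ nat \<bar>int j - m\<bar>) = (\<Sum>j\<in>A2. \<theta> * \<theta> ^ nat (int j - m - 1))"
    proof (rule sum.cong)
      fix j assume "j \<in> A2"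
      then have "nat \<bar>int j - m\<bar> = Suc (nat (int j - m - 1))" by (auto simp: A2_def)
      then show "\<theta> ^ nat \<bar>int j - m\<bar> = \<theta> * \<theta> ^ nat (int j - m - 1)" by simp
    qed simp
    also have "\<dots> = \<theta> * (\<Sum>i\<in>(\<lambda>j. nat (int j - m - 1)) ` A2. \<theta> ^ i)"
      by (simp add: sum.reindex[OF inj] sum_distrib_left)
    also have "\<dots> \<le> \<theta> * (1 / (1 - \<theta>))"
      by (intro mult_left_mono less_imp_le[OF geometric_sum_less]) (use th fin in auto)
    finally show ?thesis by simp
  qed
  have "(\<Sum>j<N. \<theta> ^ nat \<bar>int j - m\<bar>) = (\<Sum>j\<in>A1. \<theta> ^ nat \<bar>int j - m\<bar>) + (\<Sum>j\<in>A2. \<theta> ^ nat \<bar>int j - m\<bar>)"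
    unfolding un by (rule sum.union_disjoint[OF fin dis])
  also have "\<dots> \<le> 1 / (1 - \<theta>) + \<theta> / (1 - \<theta>)" using s1 s2 by linarith
  also have "\<dots> = (1 + \<theta>) / (1 - \<theta>)" by (simp add: add_divide_distrib)
  finally show ?thesis .
qed

lemma lower_term:
  assumes b: "0 < b" and R: "2 < R" and u: "0 \<le> u" and r: "0 < r" and q: "0 < q"
  shows "(\<integral>\<^sup>+ t. indicator {b / R .. b / 2} t * ennreal ((t powr (1/r) * (u * b powr (-1/r))) powr q / t) \<partial>lborel)
     = ennreal (u powr q * ((1 / 2 powr (q/r) - 1 / R powr (q/r)) / (q/r)))"
proof -
  have eq: "indicator {b / R .. b / 2} t * ennreal ((t powr (1/r) * (u * b powr (-1/r))) powr q / t)
      = ennreal (u powr q * b powr (- (q/r))) * (indicator {b / R .. b / 2} t * ennreal (t powr (q/r - 1)))" for t :: real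
  proof (cases "t \<in> {b / R .. b / 2}")
    case True
    then have t: "0 < t" using b R by (auto intro: less_le_trans[of 0 "b/R"])
    have "(t powr (1/r) * (u * b powr (-1/r))) powr q / t = u powr q * b powr (- (q/r)) * t powr (q/r - 1)"
      using t b u by (simp add: powr_mult powr_powr powr_diff field_simps)
    then show ?thesis using True t u by (simp add: ennreal_mult)
  qed simp
  have "(\<integral>\<^sup>+ t. indicator {b / R .. b / 2} t * ennreal ((t powr (1/r) * (u * b powr (-1/r))) powr q / t) \<partial>lborel)
    = ennreal (u powr q * b powr (- (q/r))) * (\<integral>\<^sup>+ t. indicator {b / R .. b / 2} t * ennreal (t powr (q/r - 1)) \<partial>lborel)"
    unfolding eq by (rule nn_integral_cmult) measurable
  also have "\<dots> = ennreal (u powr q * b powr (- (q/r))) * ennreal (((b/2) powr (q/r) - (b/R) powr (q/r)) / (q/r))"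
    by (subst nn_integral_powr_interval) (use b R r q in \<open>auto simp: field_simps\<close>)
  also have "\<dots> = ennreal (u powr q * ((1 / 2 powr (q/r) - 1 / R powr (q/r)) / (q/r)))"
  proof -
    have "(b/R) powr (q/r) \<le> (b/2) powr (q/r)" using b R r q by (intro powr_mono2) (auto simp: field_simps)
    then have nn: "0 \<le> ((b/2) powr (q/r) - (b/R) powr (q/r)) / (q/r)" using r q by simp
    have e1: "b powr (- (q/r)) * (b/2) powr (q/r) = 1 / 2 powr (q/r)"
      using b by (simp add: powr_divide powr_minus)
    have e2: "b powr (- (q/r)) * (b/R) powr (q/r) = 1 / R powr (q/r)"
      using b by (simp add: powr_divide powr_minus)
    have "u powr q * b powr (- (q/r)) * (((b/2) powr (q/r) - (b/R) powr (q/r)) / (q/r))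
        = u powr q * ((b powr (- (q/r)) * (b/2) powr (q/r) - b powr (- (q/r)) * (b/R) powr (q/r)) / (q/r))"
      by (simp add: algebra_simps)
    also have "\<dots> = u powr q * ((1 / 2 powr (q/r) - 1 / R powr (q/r)) / (q/r))" unfolding e1 e2 ..
    finally have E: "u powr q * b powr (- (q/r)) * (((b/2) powr (q/r) - (b/R) powr (q/r)) / (q/r))
        = u powr q * ((1 / 2 powr (q/r) - 1 / R powr (q/r)) / (q/r))" .
    have "ennreal (u powr q * b powr (- (q/r))) * ennreal (((b/2) powr (q/r) - (b/R) powr (q/r)) / (q/r))
       = ennreal (u powr q * b powr (- (q/r)) * (((b/2) powr (q/r) - (b/R) powr (q/r)) / (q/r)))"
      by (rule ennreal_mult[symmetric]) (use nn in auto)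
    then show ?thesis by (simp only: E)
  qed
  finally show ?thesis .
qed



lemma upper_bound_sum:
  fixes c lam :: "nat \<Rightarrow> real" and \<gamma> H :: "real \<Rightarrow> real" and N :: nat
  assumes R: "\<And>t. 0 < t \<Longrightarrow> rearr g t \<le> ennreal (H t)"
    and H: "\<And>t. 0 < t \<Longrightarrow> t powr (1/r) * H t = (\<Sum>j<N. \<bar>c j\<bar> * \<gamma> (lam j * t))"
    and H0: "\<And>t. 0 < t \<Longrightarrow> 0 \<le> H t"
    and \<gamma>0: "\<And>x. 0 \<le> \<gamma> x" and \<gamma>m[measurable]: "\<gamma> \<in> borel_measurable borel"
    and lam: "\<And>j. 0 < lam j"
    and G: "\<And>t. 0 < t \<Longrightarrow> (\<Sum>j<N. \<gamma> (lam j * t)) \<le> G"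
    and \<Gamma>: "(\<integral>\<^sup>+x. indicator {0<..} x * ennreal (\<gamma> x / x) \<partial>lborel) \<le> ennreal \<Gamma>" "0 \<le> \<Gamma>"
    and q: "1 \<le> q"
  shows "lorentz_integral r q g \<le> ennreal (G powr (q - 1) * \<Gamma> * (\<Sum>j<N. \<bar>c j\<bar> powr q))"
proof -
  define a where "a j = G powr (q - 1) * \<bar>c j\<bar> powr q" for j
  have a0: "0 \<le> a j" for j by (simp add: a_def)
  have "lorentz_integral r q g \<le> (\<integral>\<^sup>+ t. indicator {0<..} t * ennreal ((t powr (1/r) * H t) powr q / t) \<partial>lborel)"
    by (rule lorentz_integral_upper[OF R H0]) (use q in auto)
  also have "\<dots> \<le> (\<integral>\<^sup>+ t. (\<Sum>j<N. ennreal (a j) * (indicator {0<..} t * ennreal (\<gamma> (lam j * t) / t))) \<partial>lborel)"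
  proof (rule nn_integral_mono)
    fix t :: real
    show "indicator {0<..} t * ennreal ((t powr (1/r) * H t) powr q / t)
       \<le> (\<Sum>j<N. ennreal (a j) * (indicator {0<..} t * ennreal (\<gamma> (lam j * t) / t)))"
    proof (cases "0 < t")
      case True
      have sg: "0 \<le> (\<Sum>j<N. \<gamma> (lam j * t))" by (simp add: sum_nonneg \<gamma>0)
      have "(t powr (1/r) * H t) powr q = (\<Sum>j<N. \<bar>c j\<bar> * \<gamma> (lam j * t)) powr q" using H[OF True] by simp
      also have "\<dots> \<le> (\<Sum>j<N. \<gamma> (lam j * t)) powr (q - 1) * (\<Sum>j<N. \<bar>c j\<bar> powr q * \<gamma> (lam j * t))"
        by (rule holder_sum) (use \<gamma>0 q in auto)
      also have "\<dots> \<le> G powr (q - 1) * (\<Sum>j<N. \<bar>c j\<bar> powr q * \<gamma> (lam j * t))"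
        by (intro mult_right_mono powr_mono2 G[OF True] sg sum_nonneg) (use q \<gamma>0 in auto)
      also have "\<dots> = (\<Sum>j<N. a j * \<gamma> (lam j * t))" by (simp add: a_def sum_distrib_left mult.assoc)
      finally have le: "(t powr (1/r) * H t) powr q / t \<le> (\<Sum>j<N. a j * \<gamma> (lam j * t)) / t"
        using True by (simp add: divide_right_mono)
      have "ennreal ((t powr (1/r) * H t) powr q / t) \<le> ennreal ((\<Sum>j<N. a j * \<gamma> (lam j * t)) / t)"
        using le by (rule ennreal_leI)
      also have "(\<Sum>j<N. a j * \<gamma> (lam j * t)) / t = (\<Sum>j<N. a j * (\<gamma> (lam j * t) / t))"
        by (simp add: sum_divide_distrib)
      also have "ennreal \<dots> = (\<Sum>j<N. ennreal (a j * (\<gamma> (lam j * t) / t)))"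
        by (rule sum_ennreal[symmetric]) (use a0 \<gamma>0 True in auto)
      also have "\<dots> = (\<Sum>j<N. ennreal (a j) * ennreal (\<gamma> (lam j * t) / t))"
        by (rule sum.cong[OF refl], rule ennreal_mult) (use a0 \<gamma>0 True in auto)
      finally show ?thesis using True by simp
    qed simp
  qed
  also have "\<dots> = (\<Sum>j<N. ennreal (a j) * (\<integral>\<^sup>+ t. indicator {0<..} t * ennreal (\<gamma> (lam j * t) / t) \<partial>lborel))"
    by (subst nn_integral_sum) (auto simp: nn_integral_cmult)
  also have "\<dots> = (\<Sum>j<N. ennreal (a j) * (\<integral>\<^sup>+ x. indicator {0<..} x * ennreal (\<gamma> x / x) \<partial>lborel))"
    by (simp add: nn_integral_scale_dt[OF \<gamma>m lam])
  also have "\<dots> \<le> (\<Sum>j<N. ennreal (a j) * ennreal \<Gamma>)"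
    by (intro sum_mono mult_left_mono \<Gamma>(1)) auto
  also have "\<dots> = ennreal (\<Sum>j<N. a j * \<Gamma>)"
    by (subst sum_ennreal[symmetric]) (use a0 \<Gamma>(2) in \<open>auto simp: ennreal_mult\<close>)
  also have "(\<Sum>j<N. a j * \<Gamma>) = G powr (q - 1) * \<Gamma> * (\<Sum>j<N. \<bar>c j\<bar> powr q)"
    by (simp add: a_def sum_distrib_left sum_distrib_right mult_ac)
  finally show ?thesis .
qed





definition RR :: "real \<Rightarrow> real" where "RR p = 1000 powr (max p (p / (p - 1)))"
definition aa :: "real \<Rightarrow> nat \<Rightarrow> real" where "aa p k = RR p ^ k"
definition eb :: "real \<Rightarrow> nat \<Rightarrow> real \<Rightarrow> real" where
  "eb p k x = aa p k powr (-1/p) * indicator {aa p k .. 2 * aa p k} x"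
definition phi :: "real \<Rightarrow> nat \<Rightarrow> real \<Rightarrow> real" where
  "phi p k t = aa p k powr (-1/p) * ((exp (- (aa p k * t)) - exp (- (2 * aa p k * t))) / t)"

lemma RR_ge: "1 < p \<Longrightarrow> 1000 \<le> RR p"
proof -
  assume p: "1 < p"
  have "1000 powr (1::real) \<le> 1000 powr (max p (p / (p - 1)))"
    by (rule powr_mono) (use p in auto)
  then show ?thesis by (simp add: RR_def)
qed

lemma RR_pos: "1 < p \<Longrightarrow> 0 < RR p" using RR_ge[of p] by simp

lemma aa_pos: "1 < p \<Longrightarrow> 0 < aa p k" using RR_pos[of p] by (simp add: aa_def)

lemma aa_powr: "1 < p \<Longrightarrow> aa p k = RR p powr real k"
  using RR_pos[of p] by (simp add: aa_def powr_realpow)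

lemma RR_powr_bound:
  assumes p: "1 < p" and d: "0 \<le> d" and ka: "\<kappa> = 1 / p \<or> \<kappa> = 1 - 1 / p"
  shows "RR p powr (- (\<kappa> * d)) \<le> 1000 powr (- d)"
proof -
  define s where "s = max p (p / (p - 1))"
  have sk: "1 \<le> s * \<kappa>"
    using ka
  proof
    assume "\<kappa> = 1 / p"
    moreover have "p \<le> s" by (simp add: s_def)
    then have "1 \<le> s / p" using p by (simp add: le_divide_eq)
    ultimately show ?thesis by simp
  next
    assume k: "\<kappa> = 1 - 1 / p"
    have "p / (p - 1) \<le> s" by (simp add: s_def)
    then have "p / (p - 1) * ((p - 1) / p) \<le> s * ((p - 1) / p)"
      by (rule mult_right_mono) (use p in auto)
    moreover have "p / (p - 1) * ((p - 1) / p) = 1" using p by simp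
    moreover have "\<kappa> = (p - 1) / p" using k p by (simp add: field_simps)
    ultimately show ?thesis by simp
  qed
  have "RR p powr (- (\<kappa> * d)) = 1000 powr (s * (- (\<kappa> * d)))"
    by (simp add: RR_def s_def powr_powr)
  also have "\<dots> \<le> 1000 powr (- d)"
  proof (rule powr_mono)
    have "1 * d \<le> (s * \<kappa>) * d" by (rule mult_right_mono[OF sk d])
    then show "s * - (\<kappa> * d) \<le> - d" by (simp add: mult_ac)
  qed simp
  finally show ?thesis .
qed

lemma thousand_powr_nat: "(1000::real) powr (- real n) = (1/1000) ^ n"
  by (simp add: powr_minus powr_realpow power_one_over inverse_eq_divide)



lemma exp_bounds:
  fixes a t :: real assumes a: "0 < a" and t: "0 < t"
  shows "(exp (- (a * t)) - exp (- (2 * a * t))) / t \<le> a"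
    "(exp (- (a * t)) - exp (- (2 * a * t))) / t \<le> 1 / t"
    "a * exp (- (2 * a * t)) \<le> (exp (- (a * t)) - exp (- (2 * a * t))) / t"
    "0 \<le> (exp (- (a * t)) - exp (- (2 * a * t))) / t"
proof -
  define u where "u = a * t"
  have u: "0 < u" using a t by (simp add: u_def)
  have e1: "exp (- (a * t)) = exp (- u)" by (simp add: u_def)
  have e2: "exp (- (2 * a * t)) = exp (- u) * exp (- u)"
  proof -
    have "- (2 * a * t) = - u + - u" by (simp add: u_def)
    then show ?thesis by (simp only: exp_add)
  qed
  have e3: "exp (- u) * exp (- u) * exp u = exp (- u)"
  proof -
    have "exp (- u) * exp u = 1" by (simp add: exp_minus)
    then show ?thesis by (simp add: mult.assoc)
  qed
  have eu: "0 < exp (- u)" "exp (- u) \<le> 1" using u by auto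
  have A: "exp (- u) - exp (- u) * exp (- u) \<le> u"
  proof -
    have "exp (- u) * (1 - exp (- u)) \<le> 1 * (1 - exp (- u))"
      by (rule mult_right_mono) (use eu in auto)
    moreover have "1 - exp (- u) \<le> u" using exp_ge_add_one_self[of "- u"] by linarith
    ultimately show ?thesis by (simp add: algebra_simps)
  qed
  have "exp (- (a * t)) - exp (- (2 * a * t)) \<le> u" using A unfolding e1 e2 .
  then have "exp (- (a * t)) - exp (- (2 * a * t)) \<le> a * t" by (simp add: u_def)
  then show "(exp (- (a * t)) - exp (- (2 * a * t))) / t \<le> a" using t by (simp add: divide_le_eq mult.commute)
  have "0 \<le> exp (- u) * exp (- u)" by simp
  then have "exp (- u) - exp (- u) * exp (- u) \<le> 1" using eu by linarith
  then have "exp (- (a * t)) - exp (- (2 * a * t)) \<le> 1" unfolding e1 e2 .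
  then show "(exp (- (a * t)) - exp (- (2 * a * t))) / t \<le> 1 / t" using t by (simp add: divide_right_mono)
  have "exp (- u) * exp (- u) * (1 + u) \<le> exp (- u) * exp (- u) * exp u"
    by (rule mult_left_mono) auto
  then have B: "exp (- u) * exp (- u) * u \<le> exp (- u) - exp (- u) * exp (- u)"
    unfolding e3 by (simp add: algebra_simps)
  have "a * exp (- (2 * a * t)) * t = exp (- u) * exp (- u) * u" unfolding e2 u_def by (simp add: mult_ac)
  with B have "a * exp (- (2 * a * t)) * t \<le> exp (- u) - exp (- u) * exp (- u)" by simp
  then have "a * exp (- (2 * a * t)) * t \<le> exp (- (a * t)) - exp (- (2 * a * t))" unfolding e1 e2 .
  then show C: "a * exp (- (2 * a * t)) \<le> (exp (- (a * t)) - exp (- (2 * a * t))) / t"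
    using t by (simp add: le_divide_eq)
  have "0 \<le> a * exp (- (2 * a * t))" using a by simp
  then show "0 \<le> (exp (- (a * t)) - exp (- (2 * a * t))) / t" using C by linarith
qed

lemma integral_exp_interval:
  fixes a t :: real assumes a: "0 < a" and t: "0 < t"
  shows "integral\<^sup>L lborel (\<lambda>s. indicator {a .. 2 * a} s *\<^sub>R exp (- t * s))
     = (exp (- (a * t)) - exp (- (2 * a * t))) / t"
proof -
  have "integral\<^sup>L lborel (\<lambda>s. indicator {a .. 2 * a} s *\<^sub>R exp (- t * s))
      = (\<lambda>s. - exp (- t * s) / t) (2 * a) - (\<lambda>s. - exp (- t * s) / t) a"
  proof (rule integral_FTC_atLeastAtMost)
    show "a \<le> 2 * a" using a by simp
    show "continuous_on {a..2 * a} (\<lambda>s. exp (- t * s))" by (intro continuous_intros)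
    fix x assume "a \<le> x" "x \<le> 2 * a"
    have "((\<lambda>s. - exp (- t * s) / t) has_real_derivative exp (- t * x)) (at x)"
      using t by (auto intro!: derivative_eq_intros simp: field_simps)
    then show "((\<lambda>s. - exp (- t * s) / t) has_vector_derivative exp (- t * x)) (at x within {a..2 * a})"
      by (simp add: has_real_derivative_iff_has_vector_derivative has_vector_derivative_at_within)
  qed
  also have "\<dots> = (exp (- (a * t)) - exp (- (2 * a * t))) / t"
    by (simp add: diff_divide_distrib mult_ac)
  finally show ?thesis .
qed



lemma laplace_sum:
  assumes p: "1 < p" and t: "0 < t"
  shows "laplace (\<lambda>x. \<Sum>k<N. c k * eb p k x) t = (\<Sum>k<N. c k * phi p k t)"
proof -
  have eq: "indicator {0<..} s *\<^sub>R ((\<Sum>k<N. c k * eb p k s) * exp (- t * s))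
     = (\<Sum>k<N. (c k * aa p k powr (-1/p)) * (indicator {aa p k .. 2 * aa p k} s *\<^sub>R exp (- t * s)))" for s
  proof (cases "0 < s")
    case True
    then show ?thesis by (simp add: eb_def sum_distrib_right sum_distrib_left mult_ac)
  next
    case False
    have "indicator {aa p k .. 2 * aa p k} s = (0::real)" for k
      using False aa_pos[OF p, of k] by (simp add: indicator_def)
    then show ?thesis using False by simp
  qed
  have int: "integrable lborel (\<lambda>s. indicator {aa p k .. 2 * aa p k} s *\<^sub>R exp (- t * s))" for k
    using borel_integrable_atLeastAtMost'[of "aa p k" "2 * aa p k" "\<lambda>s. exp (- t * s)"]
    by (simp add: set_integrable_def continuous_intros)
  have "laplace (\<lambda>x. \<Sum>k<N. c k * eb p k x) t
     = integral\<^sup>L lborel (\<lambda>s. \<Sum>k<N. (c k * aa p k powr (-1/p)) * (indicator {aa p k .. 2 * aa p k} s *\<^sub>R exp (- t * s)))"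
    unfolding laplace_def set_lebesgue_integral_def eq ..
  also have "\<dots> = (\<Sum>k<N. integral\<^sup>L lborel (\<lambda>s. (c k * aa p k powr (-1/p)) * (indicator {aa p k .. 2 * aa p k} s *\<^sub>R exp (- t * s))))"
    by (rule Bochner_Integration.integral_sum) (use int in auto)
  also have "\<dots> = (\<Sum>k<N. (c k * aa p k powr (-1/p)) * integral\<^sup>L lborel (\<lambda>s. indicator {aa p k .. 2 * aa p k} s *\<^sub>R exp (- t * s)))"
    by (rule sum.cong[OF refl], rule Bochner_Integration.integral_mult_right) (use int in auto)
  also have "\<dots> = (\<Sum>k<N. c k * phi p k t)"
  proof (rule sum.cong[OF refl])
    fix k
    show "c k * aa p k powr (-1/p) * integral\<^sup>L lborel (\<lambda>s. indicator {aa p k .. 2 * aa p k} s *\<^sub>R exp (- t * s)) = c k * phi p k t"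
      unfolding integral_exp_interval[OF aa_pos[OF p] t] phi_def by simp
  qed
  finally show ?thesis .
qed





definition gX :: "real \<Rightarrow> real \<Rightarrow> real" where "gX p x = x powr (1/p) * indicator {..2} x"
definition gY :: "real \<Rightarrow> real \<Rightarrow> real" where "gY p x = min (x powr (1 - 1/p)) (x powr (-1/p))"

lemma RR_gt1: "1 < p \<Longrightarrow> 1 < RR p" using RR_ge[of p] by simp

lemma floor_log_bounds:
  assumes R: "1 < R" and y: "0 < y"
  shows "R powr real_of_int \<lfloor>log R y\<rfloor> \<le> y" "y < R powr (real_of_int \<lfloor>log R y\<rfloor> + 1)"
proof -
  have "R powr real_of_int \<lfloor>log R y\<rfloor> \<le> R powr (log R y)"
    by (rule powr_mono) (use R in auto)
  then show "R powr real_of_int \<lfloor>log R y\<rfloor> \<le> y" using R y by simp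
  have "R powr (log R y) < R powr (real_of_int \<lfloor>log R y\<rfloor> + 1)"
    by (rule powr_less_mono) (use R in auto)
  then show "y < R powr (real_of_int \<lfloor>log R y\<rfloor> + 1)" using R y by simp
qed

lemma gX_term:
  assumes p: "1 < p" and t: "0 < t"
  shows "gX p ((1 / aa p j) * t) \<le> 2000 * (1/1000) ^ nat \<bar>int j - (\<lfloor>log (RR p) t\<rfloor> + 1)\<bar>"
proof -
  define R where "R = RR p"
  define m where "m = \<lfloor>log R t\<rfloor>"
  have R1: "1 < R" and R0: "0 < R" and R2: "1000 \<le> R" using RR_gt1[OF p] RR_ge[OF p] by (auto simp: R_def)
  have m1: "R powr m \<le> t" and m2: "t < R powr (m + 1)"
    using floor_log_bounds[OF R1 t] by (auto simp: m_def)
  have aj: "aa p j = R powr real j" using aa_powr[OF p] by (simp add: R_def)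
  define x where "x = (1 / aa p j) * t"
  have x: "x = t / R powr real j" by (simp add: x_def aj)
  have x0: "0 < x" using t R0 by (simp add: x)
  have gx0: "0 \<le> gX p x" by (simp add: gX_def)
  consider (lt) "int j < m" | (eq) "int j = m" | (gt) "m < int j" by linarith
  then have "gX p x \<le> 2000 * (1/1000) ^ nat \<bar>int j - (m + 1)\<bar>"
  proof cases
    case lt
    have "R powr 1 \<le> R powr (real_of_int m - real j)" by (rule powr_mono) (use lt R1 in auto)
    also have "R powr (real_of_int m - real j) = R powr m / R powr real j" by (simp add: powr_diff)
    also have "\<dots> \<le> x" unfolding x by (rule divide_right_mono[OF m1]) simp
    finally have "2 < x" using R2 by simp
    then have "gX p x = 0" by (simp add: gX_def)
    then show ?thesis by simp
  next
    case eq
    have "gX p x \<le> 2" 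
    proof (cases "x \<le> 2")
      case True
      have "x powr (1/p) \<le> 2 powr (1/p)" by (rule powr_mono2) (use True x0 p in auto)
      also have "\<dots> \<le> 2 powr 1" by (rule powr_mono) (use p in auto)
      finally show ?thesis using True by (simp add: gX_def)
    qed (simp add: gX_def)
    moreover have "nat \<bar>int j - (m + 1)\<bar> = 1" using eq by simp
    ultimately show ?thesis by simp
  next
    case gt
    define d where "d = real j - real_of_int m - 1"
    have d0: "0 \<le> d" using gt by (simp add: d_def)
    have "x < R powr (m + 1) / R powr real j" unfolding x by (rule divide_strict_right_mono[OF m2]) (use R0 in simp)
    also have "\<dots> = R powr (real_of_int m + 1 - real j)" using R0 by (simp add: powr_diff[symmetric])
    also have "real_of_int m + 1 - real j = - d" by (simp add: d_def)
    finally have xl: "x < R powr (- d)" .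
    have "gX p x \<le> x powr (1/p)" by (simp add: gX_def indicator_def)
    also have "\<dots> \<le> (R powr (- d)) powr (1/p)" by (rule powr_mono2) (use xl x0 p in auto)
    also have "\<dots> = RR p powr (- (1/p * d))" by (simp add: R_def powr_powr)
    also have "\<dots> \<le> 1000 powr (- d)" by (rule RR_powr_bound[OF p d0]) simp
    also have "d = real (nat \<bar>int j - (m + 1)\<bar>)" using gt by (simp add: d_def)
    also have "(1000::real) powr (- real (nat \<bar>int j - (m + 1)\<bar>)) = (1/1000) ^ nat \<bar>int j - (m + 1)\<bar>"
      by (rule thousand_powr_nat)
    finally have "gX p x \<le> (1/1000) ^ nat \<bar>int j - (m + 1)\<bar>" .
    moreover have "0 \<le> (1/1000::real) ^ nat \<bar>int j - (m + 1)\<bar>" by simp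
    ultimately show ?thesis by linarith
  qed
  then show ?thesis by (simp add: x_def m_def R_def)
qed

lemma gX_sum:
  assumes p: "1 < p" and t: "0 < t"
  shows "(\<Sum>j<N. gX p ((1 / aa p j) * t)) \<le> 2000 * ((1 + 1/1000) / (1 - 1/1000))"
proof -
  have "(\<Sum>j<N. gX p ((1 / aa p j) * t)) \<le> (\<Sum>j<N. 2000 * (1/1000) ^ nat \<bar>int j - (\<lfloor>log (RR p) t\<rfloor> + 1)\<bar>)"
    by (rule sum_mono) (rule gX_term[OF p t])
  also have "\<dots> = 2000 * (\<Sum>j<N. (1/1000) ^ nat \<bar>int j - (\<lfloor>log (RR p) t\<rfloor> + 1)\<bar>)"
    by (simp add: sum_distrib_left)
  also have "\<dots> \<le> 2000 * ((1 + 1/1000) / (1 - 1/1000))"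
    by (rule mult_left_mono[OF geo_abs_sum]) auto
  finally show ?thesis .
qed

lemma gY_term:
  assumes p: "1 < p" and t: "0 < t"
  shows "gY p (aa p j * t) \<le> 1000 * (1/1000) ^ nat \<bar>int j - \<lfloor>log (RR p) (1/t)\<rfloor>\<bar>"
proof -
  define R where "R = RR p"
  define m where "m = \<lfloor>log R (1/t)\<rfloor>"
  have R1: "1 < R" and R0: "0 < R" using RR_gt1[OF p] by (auto simp: R_def)
  have t1: "0 < 1/t" using t by simp
  have m1: "R powr m \<le> 1/t" and m2: "1/t < R powr (m + 1)"
    using floor_log_bounds[OF R1 t1] by (auto simp: m_def)
  have aj: "aa p j = R powr real j" using aa_powr[OF p] by (simp add: R_def)
  define x where "x = aa p j * t"
  have x: "x = R powr real j * t" by (simp add: x_def aj)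
  have x0: "0 < x" using t R0 by (simp add: x)
  consider (le) "int j \<le> m" | (gt) "m < int j" by linarith
  then have "gY p x \<le> 1000 * (1/1000) ^ nat \<bar>int j - m\<bar>"
  proof cases
    case le
    define d where "d = real_of_int m - real j"
    have d0: "0 \<le> d" using le by (simp add: d_def)
    have tle: "t \<le> 1 / R powr m" using m1 t R0 by (simp add: field_simps)
    have "x \<le> R powr real j * (1 / R powr m)" unfolding x by (rule mult_left_mono[OF tle]) simp
    also have "\<dots> = R powr real j / R powr m" by simp
    also have "\<dots> = R powr (real j - m)" by (rule powr_diff[symmetric])
    also have "\<dots> = R powr (- d)" by (simp add: d_def)
    finally have xl: "x \<le> R powr (- d)" .
    have "gY p x \<le> x powr (1 - 1/p)" by (simp add: gY_def)
    also have "\<dots> \<le> (R powr (- d)) powr (1 - 1/p)" by (rule powr_mono2) (use xl x0 p in auto)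
    also have "\<dots> = RR p powr (- ((1 - 1/p) * d))" by (simp add: R_def powr_powr mult.commute)
    also have "\<dots> \<le> 1000 powr (- d)" by (rule RR_powr_bound[OF p d0]) simp
    also have "d = real (nat \<bar>int j - m\<bar>)" using le by (simp add: d_def)
    also have "(1000::real) powr (- real (nat \<bar>int j - m\<bar>)) = (1/1000) ^ nat \<bar>int j - m\<bar>"
      by (rule thousand_powr_nat)
    finally have "gY p x \<le> (1/1000) ^ nat \<bar>int j - m\<bar>" .
    moreover have "0 \<le> (1/1000::real) ^ nat \<bar>int j - m\<bar>" by simp
    ultimately show ?thesis by linarith
  next
    case gt
    define d where "d = real j - real_of_int m - 1"
    have d0: "0 \<le> d" using gt by (simp add: d_def)
    have tge: "1 / R powr (m + 1) < t" using m2 t R0 by (simp add: field_simps)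
    have "R powr real j * (1 / R powr (m + 1)) < x" unfolding x by (rule mult_strict_left_mono[OF tge]) (use R0 in simp)
    moreover have "R powr real j * (1 / R powr (m + 1)) = R powr d"
    proof -
      have "R powr real j * (1 / R powr (m + 1)) = R powr real j / R powr (m + 1)" by simp
      also have "\<dots> = R powr (real j - (m + 1))" by (rule powr_diff[symmetric])
      also have "real j - (m + 1) = d" by (simp add: d_def)
      finally show ?thesis .
    qed
    ultimately have xl: "R powr d \<le> x" by simp
    have "gY p x \<le> x powr (- 1/p)" by (simp add: gY_def)
    also have "\<dots> \<le> (R powr d) powr (- 1/p)" by (rule powr_mono2') (use xl R0 p in auto)
    also have "\<dots> = RR p powr (- (1/p * d))" by (simp add: R_def powr_powr)
    also have "\<dots> \<le> 1000 powr (- d)" by (rule RR_powr_bound[OF p d0]) simp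
    also have "d = real (nat \<bar>int j - m\<bar> - 1)" using gt by (simp add: d_def of_nat_diff)
    also have "(1000::real) powr (- real (nat \<bar>int j - m\<bar> - 1)) = (1/1000) ^ (nat \<bar>int j - m\<bar> - 1)"
      by (rule thousand_powr_nat)
    also have "\<dots> = 1000 * (1/1000) ^ nat \<bar>int j - m\<bar>"
    proof -
      have "nat \<bar>int j - m\<bar> = Suc (nat \<bar>int j - m\<bar> - 1)" using gt by simp
      then have "(1/1000::real) ^ nat \<bar>int j - m\<bar> = (1/1000) * (1/1000) ^ (nat \<bar>int j - m\<bar> - 1)"
        by (metis power_Suc)
      then show ?thesis by simp
    qed
    finally show ?thesis by simp
  qed
  then show ?thesis by (simp add: x_def m_def R_def)
qed

lemma gY_sum:
  assumes p: "1 < p" and t: "0 < t"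
  shows "(\<Sum>j<N. gY p (aa p j * t)) \<le> 1000 * ((1 + 1/1000) / (1 - 1/1000))"
proof -
  have "(\<Sum>j<N. gY p (aa p j * t)) \<le> (\<Sum>j<N. 1000 * (1/1000) ^ nat \<bar>int j - \<lfloor>log (RR p) (1/t)\<rfloor>\<bar>)"
    by (rule sum_mono) (rule gY_term[OF p t])
  also have "\<dots> = 1000 * (\<Sum>j<N. (1/1000) ^ nat \<bar>int j - \<lfloor>log (RR p) (1/t)\<rfloor>\<bar>)"
    by (simp add: sum_distrib_left)
  also have "\<dots> \<le> 1000 * ((1 + 1/1000) / (1 - 1/1000))"
    by (rule mult_left_mono[OF geo_abs_sum]) auto
  finally show ?thesis .
qed



lemma nn_from_hasint:
  fixes f :: "real \<Rightarrow> real"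
  assumes I: "(f has_integral I) S" and S: "S \<in> sets borel" and f: "f \<in> borel_measurable borel"
    and nn: "\<And>x. x \<in> S \<Longrightarrow> 0 \<le> f x"
  shows "(\<integral>\<^sup>+x. ennreal (indicator S x * f x) \<partial>lborel) = ennreal I"
proof (rule nn_integral_has_integral_lborel)
  show "(\<lambda>x. indicator S x * f x) \<in> borel_measurable borel" using S f by measurable
  show "0 \<le> indicator S x * f x" for x using nn by (simp add: indicator_def)
  have e: "(\<lambda>x. indicator S x * f x) = (\<lambda>x. if x \<in> S then f x else 0)" by (auto simp: indicator_def)
  show "((\<lambda>x. indicator S x * f x) has_integral I) UNIV" unfolding e has_integral_restrict_UNIV by (rule I)
qed

definition GXc :: real where "GXc = 2000 * ((1 + 1/1000) / (1 - 1/1000))"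
definition GYc :: real where "GYc = 1000 * ((1 + 1/1000) / (1 - 1/1000))"
definition GamX :: "real \<Rightarrow> real" where "GamX p = 2 powr (1/p) / (1/p)"
definition GamY :: "real \<Rightarrow> real" where "GamY p = 1 / (1 - 1/p) + p"

lemma GamX_bound:
  assumes p: "1 < p"
  shows "(\<integral>\<^sup>+x. indicator {0<..} x * ennreal (gX p x / x) \<partial>lborel) \<le> ennreal (GamX p)"
proof -
  have eq: "indicator {0<..} x * ennreal (gX p x / x) = ennreal (indicator {0..2} x * x powr (1/p - 1))" for x :: real
  proof (cases "0 < x")
    case True
    have "gX p x / x = indicator {0..2} x * x powr (1/p - 1)"
      using True by (simp add: gX_def indicator_def powr_diff)
    then show ?thesis using True by simp
  next
    case False
    then show ?thesis by (cases "x = 0") (auto simp: indicator_def)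
  qed
  have "(\<integral>\<^sup>+x. indicator {0<..} x * ennreal (gX p x / x) \<partial>lborel) = ennreal (2 powr (1/p - 1 + 1) / (1/p - 1 + 1))"
    unfolding eq
    by (rule nn_from_hasint[OF has_integral_powr_from_0]) (use p in auto)
  then show ?thesis by (simp add: GamX_def)
qed

lemma GamY_bound:
  assumes p: "1 < p"
  shows "(\<integral>\<^sup>+x. indicator {0<..} x * ennreal (gY p x / x) \<partial>lborel) \<le> ennreal (GamY p)"
proof -
  have le: "indicator {0<..} x * ennreal (gY p x / x) \<le> ennreal (indicator {0..1} x * x powr (-1/p)) + ennreal (indicator {1..} x * x powr (-1/p - 1))" for x :: real
  proof (cases "0 < x")
    case True
    show ?thesis
    proof (cases "x \<le> 1")
      case True2: True
      have "gY p x / x \<le> x powr (1 - 1/p) / x" using True by (intro divide_right_mono) (auto simp: gY_def)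
      also have "\<dots> = x powr (1 - 1/p) / x powr 1" using True by simp
      also have "\<dots> = x powr (1 - 1/p - 1)" by (rule powr_diff[symmetric])
      also have "1 - 1/p - 1 = -1/p" by simp
      finally have "ennreal (gY p x / x) \<le> ennreal (indicator {0..1} x * x powr (-1/p))"
        using True True2 by (auto simp: indicator_def intro: ennreal_leI)
      then show ?thesis using True by (simp add: add_increasing2)
    next
      case False
      have "gY p x / x \<le> x powr (-1/p) / x" using True by (intro divide_right_mono) (auto simp: gY_def)
      also have "\<dots> = x powr (-1/p) / x powr 1" using True by simp
      also have "\<dots> = x powr (-1/p - 1)" by (rule powr_diff[symmetric])
      finally have "ennreal (gY p x / x) \<le> ennreal (indicator {1..} x * x powr (-1/p - 1))"
        using True False by (auto simp: indicator_def intro: ennreal_leI)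
      then show ?thesis using True by (simp add: add_increasing)
    qed
  qed simp
  have "(\<integral>\<^sup>+x. indicator {0<..} x * ennreal (gY p x / x) \<partial>lborel)
     \<le> (\<integral>\<^sup>+x. ennreal (indicator {0..1} x * x powr (-1/p)) + ennreal (indicator {1..} x * x powr (-1/p - 1)) \<partial>lborel)"
    by (rule nn_integral_mono) (rule le)
  also have "\<dots> = (\<integral>\<^sup>+x. ennreal (indicator {0..1} x * x powr (-1/p)) \<partial>lborel) + (\<integral>\<^sup>+x. ennreal (indicator {1..} x * x powr (-1/p - 1)) \<partial>lborel)"
    by (rule nn_integral_add) measurable
  also have "(\<integral>\<^sup>+x. ennreal (indicator {0..1} x * x powr (-1/p)) \<partial>lborel) = ennreal (1 powr (-1/p + 1) / (-1/p + 1))"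
    by (rule nn_from_hasint[OF has_integral_powr_from_0]) (use p in auto)
  also have "(\<integral>\<^sup>+x. ennreal (indicator {1..} x * x powr (-1/p - 1)) \<partial>lborel) = ennreal (- (1 powr (-1/p - 1 + 1)) / (-1/p - 1 + 1))"
    by (rule nn_from_hasint[OF has_integral_powr_to_inf]) (use p in auto)
  also have "ennreal (1 powr (-1/p + 1) / (-1/p + 1)) + ennreal (- (1 powr (-1/p - 1 + 1)) / (-1/p - 1 + 1)) = ennreal (GamY p)"
  proof -
    have a: "1 powr (-1/p + 1) / (-1/p + 1) = 1 / (1 - 1/p)" by simp
    have b: "- (1 powr (-1/p - 1 + 1)) / (-1/p - 1 + 1) = p" using p by simp
    have c: "0 \<le> 1 / (1 - 1/p)" using p by (simp add: field_simps)
    show ?thesis unfolding a b GamY_def using c p by (simp add: ennreal_plus)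
  qed
  finally show ?thesis .
qed



definition fsum :: "real \<Rightarrow> (nat \<Rightarrow> real) \<Rightarrow> nat \<Rightarrow> real \<Rightarrow> real" where
  "fsum p c N x = (\<Sum>k<N. c k * eb p k x)"
definition lsum :: "real \<Rightarrow> (nat \<Rightarrow> real) \<Rightarrow> nat \<Rightarrow> real \<Rightarrow> real" where
  "lsum p c N t = (\<Sum>k<N. c k * phi p k t)"

lemma X_upper:
  assumes p: "1 < p" and q: "1 < q"
  shows "lorentz_integral p q (fsum p c N) \<le> ennreal (GXc powr (q - 1) * GamX p * (\<Sum>j<N. \<bar>c j\<bar> powr q))"
proof (rule upper_bound_sum)
  define H where "H t = (\<Sum>j<N. \<bar>c j\<bar> * aa p j powr (-1/p) * indicator {..2 * aa p j} t)" for t :: real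
  show "rearr (fsum p c N) t \<le> ennreal (H t)" if t: "0 < t" for t
  proof (rule rearr_upper[OF _ _ t])
    fix x y :: real assume "0 < x" "x \<le> y"
    then show "H y \<le> H x" unfolding H_def
      by (intro sum_mono mult_left_mono) (auto simp: indicator_def)
  next
    fix x :: real assume "0 < x"
    have "\<bar>fsum p c N x\<bar> \<le> (\<Sum>k<N. \<bar>c k * eb p k x\<bar>)" unfolding fsum_def by (rule sum_abs)
    also have "\<dots> \<le> H x" unfolding H_def
    proof (rule sum_mono)
      fix k assume "k \<in> {..<N}"
      have "\<bar>c k * eb p k x\<bar> = \<bar>c k\<bar> * aa p k powr (-1/p) * indicator {aa p k .. 2 * aa p k} x"
        by (simp add: eb_def abs_mult)
      also have "\<dots> \<le> \<bar>c k\<bar> * aa p k powr (-1/p) * indicator {..2 * aa p k} x"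
        by (intro mult_left_mono) (auto simp: indicator_def)
      finally show "\<bar>c k * eb p k x\<bar> \<le> \<bar>c k\<bar> * aa p k powr (-1/p) * indicator {..2 * aa p k} x" .
    qed
    finally show "\<bar>fsum p c N x\<bar> \<le> H x" .
  qed
  show "t powr (1/p) * H t = (\<Sum>j<N. \<bar>c j\<bar> * gX p ((1 / aa p j) * t))" if t: "0 < t" for t
    unfolding H_def sum_distrib_left
  proof (rule sum.cong[OF refl])
    fix j
    have a: "0 < aa p j" by (rule aa_pos[OF p])
    have i1: "(1 / aa p j) powr (1/p) = aa p j powr (-1/p)"
      using a by (simp add: powr_divide powr_minus inverse_eq_divide)
    have e1: "((1 / aa p j) * t) powr (1/p) = t powr (1/p) * aa p j powr (-1/p)"
      unfolding powr_mult i1 by (rule mult.commute)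
    have e2: "indicator {..2} ((1 / aa p j) * t) = (indicator {..2 * aa p j} t :: real)"
      using a by (simp add: indicator_def field_simps)
    show "t powr (1/p) * (\<bar>c j\<bar> * aa p j powr (-1/p) * indicator {..2 * aa p j} t) = \<bar>c j\<bar> * gX p ((1 / aa p j) * t)"
      unfolding gX_def e1 e2 by (simp add: mult_ac)
  qed
  show "0 \<le> H t" for t unfolding H_def by (intro sum_nonneg) auto
  show "0 \<le> gX p x" for x by (simp add: gX_def)
  show "gX p \<in> borel_measurable borel" unfolding gX_def[abs_def] by measurable
  show "0 < 1 / aa p j" for j using aa_pos[OF p] by simp
  show "(\<Sum>j<N. gX p (1 / aa p j * t)) \<le> GXc" if "0 < t" for t
    unfolding GXc_def by (rule gX_sum[OF p that])
  show "(\<integral>\<^sup>+x. indicator {0<..} x * ennreal (gX p x / x) \<partial>lborel) \<le> ennreal (GamX p)" by (rule GamX_bound[OF p])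
  show "0 \<le> GamX p" using p by (simp add: GamX_def)
  show "1 \<le> q" using q by simp
qed

lemma min_scale: "0 \<le> k \<Longrightarrow> k * min x y = min (k * x) (k * (y::real))"
  by (auto simp: min_def mult_left_mono mult_le_cancel_left)

lemma inv_conj: "1 < p \<Longrightarrow> 1 / (p / (p - 1)) = 1 - 1 / (p::real)"
  by (simp add: field_simps)

lemma phi_bounds:
  assumes p: "1 < p" and t: "0 < t"
  shows "0 \<le> phi p k t" "phi p k t \<le> min (aa p k powr (1 - 1/p)) (aa p k powr (-1/p) / t)"
    "aa p k powr (1 - 1/p) * exp (- (2 * aa p k * t)) \<le> phi p k t"
proof -
  have a: "0 < aa p k" by (rule aa_pos[OF p])
  note E = exp_bounds[OF a t]
  have P: "0 < aa p k powr (-1/p)" using a by simp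
  show "0 \<le> phi p k t" unfolding phi_def by (rule mult_nonneg_nonneg) (use E(4) P in auto)
  have pa: "aa p k powr (-1/p) * aa p k = aa p k powr (1 - 1/p)"
  proof -
    have "aa p k powr (1 - 1/p) = aa p k powr (1 + (-1/p))" by simp
    also have "\<dots> = aa p k powr 1 * aa p k powr (-1/p)" by (rule powr_add)
    also have "aa p k powr 1 = aa p k" using a by simp
    finally show ?thesis by simp
  qed
  have "phi p k t \<le> aa p k powr (-1/p) * aa p k" unfolding phi_def
    by (rule mult_left_mono[OF E(1)]) (use P in simp)
  moreover have "phi p k t \<le> aa p k powr (-1/p) * (1 / t)" unfolding phi_def
    by (rule mult_left_mono[OF E(2)]) (use P in simp)
  ultimately show "phi p k t \<le> min (aa p k powr (1 - 1/p)) (aa p k powr (-1/p) / t)"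
    using pa by simp
  have "aa p k powr (-1/p) * (aa p k * exp (- (2 * aa p k * t))) \<le> phi p k t" unfolding phi_def
    by (rule mult_left_mono[OF E(3)]) (use P in simp)
  then show "aa p k powr (1 - 1/p) * exp (- (2 * aa p k * t)) \<le> phi p k t"
    using pa by (simp add: mult.assoc[symmetric])
qed

lemma Y_upper:
  assumes p: "1 < p" and q: "1 < q"
  shows "lorentz_integral (p / (p - 1)) q (lsum p c N) \<le> ennreal (GYc powr (q - 1) * GamY p * (\<Sum>j<N. \<bar>c j\<bar> powr q))"
proof (rule upper_bound_sum)
  define H where "H t = (\<Sum>j<N. \<bar>c j\<bar> * min (aa p j powr (1 - 1/p)) (aa p j powr (-1/p) / t))" for t :: real
  show "rearr (lsum p c N) t \<le> ennreal (H t)" if t: "0 < t" for t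
  proof (rule rearr_upper[OF _ _ t])
    fix x y :: real assume xy: "0 < x" "x \<le> y"
    show "H y \<le> H x" unfolding H_def
    proof (intro sum_mono mult_left_mono)
      fix j
      have "aa p j powr (-1/p) / y \<le> aa p j powr (-1/p) / x"
        using xy by (intro divide_left_mono) auto
      then show "min (aa p j powr (1 - 1/p)) (aa p j powr (-1/p) / y) \<le> min (aa p j powr (1 - 1/p)) (aa p j powr (-1/p) / x)"
        by simp
    qed simp
  next
    fix x :: real assume x: "0 < x"
    have "\<bar>lsum p c N x\<bar> \<le> (\<Sum>k<N. \<bar>c k * phi p k x\<bar>)" unfolding lsum_def by (rule sum_abs)
    also have "\<dots> \<le> H x" unfolding H_def
    proof (rule sum_mono)
      fix k assume "k \<in> {..<N}"
      have "\<bar>c k * phi p k x\<bar> = \<bar>c k\<bar> * phi p k x" using phi_bounds(1)[OF p x, of k] by (simp add: abs_mult)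
      also have "\<dots> \<le> \<bar>c k\<bar> * min (aa p k powr (1 - 1/p)) (aa p k powr (-1/p) / x)"
        by (rule mult_left_mono[OF phi_bounds(2)[OF p x]]) simp
      finally show "\<bar>c k * phi p k x\<bar> \<le> \<bar>c k\<bar> * min (aa p k powr (1 - 1/p)) (aa p k powr (-1/p) / x)" .
    qed
    finally show "\<bar>lsum p c N x\<bar> \<le> H x" .
  qed
  show "t powr (1 / (p / (p - 1))) * H t = (\<Sum>j<N. \<bar>c j\<bar> * gY p (aa p j * t))" if t: "0 < t" for t
    unfolding H_def sum_distrib_left inv_conj[OF p]
  proof (rule sum.cong[OF refl])
    fix j
    have a: "0 < aa p j" by (rule aa_pos[OF p])
    have T: "0 \<le> t powr (1 - 1/p)" by simp
    have e1: "t powr (1 - 1/p) * aa p j powr (1 - 1/p) = (aa p j * t) powr (1 - 1/p)"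
      using a t by (simp add: powr_mult)
    have e2: "t powr (1 - 1/p) * (aa p j powr (-1/p) / t) = (aa p j * t) powr (-1/p)"
    proof -
      have "t powr (1 - 1/p) / t = t powr (1 - 1/p) / t powr 1" using t by simp
      also have "\<dots> = t powr (1 - 1/p - 1)" by (rule powr_diff[symmetric])
      also have "1 - 1/p - 1 = -1/p" by simp
      finally have tt: "t powr (1 - 1/p) / t = t powr (-1/p)" .
      have "t powr (1 - 1/p) * (aa p j powr (-1/p) / t) = aa p j powr (-1/p) * (t powr (1 - 1/p) / t)"
        by simp
      also have "\<dots> = aa p j powr (-1/p) * t powr (-1/p)" unfolding tt ..
      also have "\<dots> = (aa p j * t) powr (-1/p)" using a t by (simp add: powr_mult)
      finally show ?thesis .
    qed
    show "t powr (1 - 1/p) * (\<bar>c j\<bar> * min (aa p j powr (1 - 1/p)) (aa p j powr (-1/p) / t)) = \<bar>c j\<bar> * gY p (aa p j * t)"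
    proof -
      have "t powr (1 - 1/p) * (\<bar>c j\<bar> * min (aa p j powr (1 - 1/p)) (aa p j powr (-1/p) / t))
          = \<bar>c j\<bar> * (t powr (1 - 1/p) * min (aa p j powr (1 - 1/p)) (aa p j powr (-1/p) / t))"
        by (rule mult.left_commute)
      also have "t powr (1 - 1/p) * min (aa p j powr (1 - 1/p)) (aa p j powr (-1/p) / t)
          = min (t powr (1 - 1/p) * aa p j powr (1 - 1/p)) (t powr (1 - 1/p) * (aa p j powr (-1/p) / t))"
        by (rule min_scale[OF T])
      also have "\<dots> = gY p (aa p j * t)" unfolding e1 e2 gY_def ..
      finally show ?thesis .
    qed
  qed
  show "0 \<le> H t" if "0 < t" for t unfolding H_def using that by (intro sum_nonneg mult_nonneg_nonneg) auto
  show "0 \<le> gY p x" for x by (simp add: gY_def)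
  show "gY p \<in> borel_measurable borel" unfolding gY_def[abs_def] by measurable
  show "0 < aa p j" for j by (rule aa_pos[OF p])
  show "(\<Sum>j<N. gY p (aa p j * t)) \<le> GYc" if "0 < t" for t
    unfolding GYc_def by (rule gY_sum[OF p that])
  show "(\<integral>\<^sup>+x. indicator {0<..} x * ennreal (gY p x / x) \<partial>lborel) \<le> ennreal (GamY p)" by (rule GamY_bound[OF p])
  show "0 \<le> GamY p" using p by (simp add: GamY_def field_simps)
  show "1 \<le> q" using q by simp
qed



definition WW :: "nat \<Rightarrow> nat \<Rightarrow> real" where
  "WW k j = (if j = k then 0 else (1/1000) ^ nat \<bar>int j - int k\<bar>)"

lemma WW_nonneg: "0 \<le> WW k j" by (simp add: WW_def)
lemma WW_sym: "WW k j = WW j k" by (simp add: WW_def abs_minus_commute)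

lemma WW_rowsum:
  assumes k: "k < N"
  shows "(\<Sum>j<N. WW k j) \<le> 2 / 999"
proof -
  let ?f = "\<lambda>j. (1/1000::real) ^ nat \<bar>int j - int k\<bar>"
  have kin: "k \<in> {..<N}" using k by simp
  have "(\<Sum>j<N. WW k j) = WW k k + (\<Sum>j\<in>{..<N} - {k}. WW k j)" by (rule sum.remove[OF _ kin]) simp
  also have "\<dots> = (\<Sum>j\<in>{..<N} - {k}. ?f j)" by (simp add: WW_def)
  also have "\<dots> = (\<Sum>j<N. ?f j) - ?f k" using sum.remove[OF _ kin, of ?f] by simp
  also have "\<dots> = (\<Sum>j<N. ?f j) - 1" by simp
  also have "\<dots> \<le> (1 + 1/1000) / (1 - 1/1000) - 1"
    using geo_abs_sum[of "1/1000" "int k" N] by simp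
  also have "\<dots> = 2 / 999" by simp
  finally show ?thesis .
qed

lemma two_point_convex:
  fixes a b q :: real
  assumes q: "1 \<le> q" and a: "0 \<le> a" "0 \<le> b"
  shows "(a + b) powr q \<le> 2 powr (q - 1) * (a powr q + b powr q)"
proof -
  have "(\<Sum>i\<in>{0::nat,1}. (if i = 0 then a else b) * 1) powr q
      \<le> (\<Sum>i\<in>{0::nat,1}. (1::real)) powr (q - 1) * (\<Sum>i\<in>{0::nat,1}. (if i = 0 then a else b) powr q * 1)"
    by (rule holder_sum) (use a q in auto)
  then show ?thesis by simp
qed

lemma comb_lower:
  fixes c :: "nat \<Rightarrow> real" and N :: nat
  assumes q: "1 < q"
  defines "E \<equiv> \<lambda>k. 2 * (\<Sum>j<N. \<bar>c j\<bar> * WW k j)"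
  shows "18 powr (- q) * (\<Sum>k<N. \<bar>c k\<bar> powr q) \<le> (\<Sum>k<N. (max 0 (\<bar>c k\<bar> / 9 - E k)) powr q)"
proof -
  define w where "w k = max 0 (\<bar>c k\<bar> / 9 - E k)" for k
  define C where "C = (\<Sum>k<N. \<bar>c k\<bar> powr q)"
  have E0: "0 \<le> E k" for k unfolding E_def by (intro mult_nonneg_nonneg sum_nonneg) (auto simp: WW_nonneg)
  have w0: "0 \<le> w k" for k by (simp add: w_def)
  have C0: "0 \<le> C" by (simp add: C_def sum_nonneg)
  have a: "(\<bar>c k\<bar> / 9) powr q \<le> 2 powr (q - 1) * (w k powr q + E k powr q)" for k
  proof -
    have "\<bar>c k\<bar> / 9 \<le> w k + E k" unfolding w_def by linarith
    then have "(\<bar>c k\<bar> / 9) powr q \<le> (w k + E k) powr q" by (rule powr_mono2[rotated 2]) (use q in auto)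
    also have "\<dots> \<le> 2 powr (q - 1) * (w k powr q + E k powr q)"
      by (rule two_point_convex) (use q w0 E0 in auto)
    finally show ?thesis .
  qed
  have b: "E k powr q \<le> 2 powr q * (2/999) powr (q - 1) * (\<Sum>j<N. \<bar>c j\<bar> powr q * WW k j)" if k: "k < N" for k
  proof -
    have "E k powr q = 2 powr q * (\<Sum>j<N. \<bar>c j\<bar> * WW k j) powr q"
      unfolding E_def by (simp add: powr_mult sum_nonneg WW_nonneg)
    also have "(\<Sum>j<N. \<bar>c j\<bar> * WW k j) powr q \<le> (\<Sum>j<N. WW k j) powr (q - 1) * (\<Sum>j<N. \<bar>c j\<bar> powr q * WW k j)"
      by (rule holder_sum) (use q in \<open>auto simp: WW_nonneg\<close>)
    also have "\<dots> \<le> (2/999) powr (q - 1) * (\<Sum>j<N. \<bar>c j\<bar> powr q * WW k j)"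
      by (intro mult_right_mono powr_mono2 WW_rowsum[OF k] sum_nonneg mult_nonneg_nonneg) (use q in \<open>auto simp: WW_nonneg\<close>)
    finally show ?thesis by (simp add: mult_left_mono mult.assoc)
  qed
  have sumb: "(\<Sum>k<N. E k powr q) \<le> 2 powr q * (2/999) powr (q - 1) * (2/999) * C"
  proof -
    have "(\<Sum>k<N. E k powr q) \<le> (\<Sum>k<N. 2 powr q * (2/999) powr (q - 1) * (\<Sum>j<N. \<bar>c j\<bar> powr q * WW k j))"
      by (rule sum_mono) (use b in auto)
    also have "\<dots> = 2 powr q * (2/999) powr (q - 1) * (\<Sum>k<N. \<Sum>j<N. \<bar>c j\<bar> powr q * WW k j)"
      by (simp add: sum_distrib_left)
    also have "(\<Sum>k<N. \<Sum>j<N. \<bar>c j\<bar> powr q * WW k j) = (\<Sum>j<N. \<bar>c j\<bar> powr q * (\<Sum>k<N. WW j k))"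
      by (subst sum.swap) (simp add: sum_distrib_left WW_sym)
    also have "\<dots> \<le> (\<Sum>j<N. \<bar>c j\<bar> powr q * (2/999))"
      by (intro sum_mono mult_left_mono WW_rowsum) auto
    also have "\<dots> = (2/999) * C" unfolding C_def sum_distrib_left by (simp add: mult.commute)
    finally show ?thesis by (simp add: mult_left_mono mult.assoc)
  qed
  have "(1/9) powr q * C = (\<Sum>k<N. (\<bar>c k\<bar> / 9) powr q)"
    by (simp add: C_def sum_distrib_left powr_divide)
  also have "\<dots> \<le> (\<Sum>k<N. 2 powr (q - 1) * (w k powr q + E k powr q))"
    by (rule sum_mono) (rule a)
  also have "\<dots> = 2 powr (q - 1) * (\<Sum>k<N. w k powr q) + 2 powr (q - 1) * (\<Sum>k<N. E k powr q)"
    by (simp add: sum_distrib_left sum.distrib distrib_left)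
  also have "2 powr (q - 1) * (\<Sum>k<N. E k powr q) \<le> 2 powr (q - 1) * (2 powr q * (2/999) powr (q - 1) * (2/999) * C)"
    by (rule mult_left_mono[OF sumb]) simp
  also have "2 powr (q - 1) * (2 powr q * (2/999) powr (q - 1) * (2/999) * C) = (8/999) powr q / 2 * C"
  proof -
    have e1: "(2::real) powr (q - 1) = 2 powr q / 2" by (simp add: powr_diff)
    have x: "(2/999::real) powr (q - 1) * (2/999) = (2/999) powr q" by (simp add: powr_diff)
    have e2: "2 powr q * (2/999) powr (q - 1) * (2/999) = 2 powr q * (2/999::real) powr q"
      by (simp only: mult.assoc x)
    have e3: "(2::real) powr q * (2 powr q * (2/999) powr q) = (8/999) powr q"
      by (simp add: powr_mult[symmetric])
    have "2 powr (q - 1) * (2 powr q * (2/999) powr (q - 1) * (2/999) * C)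
        = (2 powr q / 2) * ((2 powr q * (2/999) powr (q - 1) * (2/999)) * C)" unfolding e1 ..
    also have "\<dots> = (2 powr q / 2) * ((2 powr q * (2/999) powr q) * C)" unfolding e2 ..
    also have "\<dots> = (2 powr q * (2 powr q * (2/999) powr q)) / 2 * C" by (simp add: algebra_simps)
    also have "\<dots> = (8/999) powr q / 2 * C" unfolding e3 ..
    finally show ?thesis .
  qed
  also have "(8/999::real) powr q \<le> (1/9) powr q" by (rule powr_mono2) (use q in auto)
  finally have "(1/9) powr q * C \<le> 2 powr (q - 1) * (\<Sum>k<N. w k powr q) + (1/9) powr q / 2 * C"
    using C0 by (smt (verit) divide_right_mono mult_right_mono)
  then have "(1/9) powr q / 2 * C \<le> 2 powr (q - 1) * (\<Sum>k<N. w k powr q)" by simp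
  then have F1: "(1/9) powr q / 2 / 2 powr (q - 1) * C \<le> (\<Sum>k<N. w k powr q)"
    by (simp add: field_simps)
  have F2: "(1/9) powr q / 2 / 2 powr (q - 1) = 18 powr (- q)"
  proof -
    have "(2::real) powr (q - 1) * 2 = 2 powr q" by (simp add: powr_diff)
    then have "(1/9) powr q / 2 / 2 powr (q - 1) = (1/9) powr q / 2 powr q" by (simp add: field_simps)
    also have "\<dots> = (1/18) powr q" by (simp add: powr_divide[symmetric])
    also have "\<dots> = 18 powr (- q)" by (simp add: powr_minus powr_divide inverse_eq_divide)
    finally show ?thesis .
  qed
  show ?thesis using F1 unfolding F2 C_def w_def .
qed



lemma aa_gap:
  assumes p: "1 < p" and jk: "j < k"
  shows "RR p * aa p j \<le> aa p k"
proof -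
  have R1: "1 \<le> RR p" using RR_gt1[OF p] by simp
  have "RR p * aa p j = RR p ^ Suc j" by (simp add: aa_def)
  also have "\<dots> \<le> RR p ^ k" by (rule power_increasing) (use jk R1 in auto)
  finally show ?thesis by (simp add: aa_def)
qed

lemma eb_other:
  assumes p: "1 < p" and x: "x \<in> {aa p k .. 2 * aa p k}" and jk: "j \<noteq> k"
  shows "eb p j x = 0"
proof -
  have R2: "2 < RR p" using RR_ge[OF p] by simp
  have a: "0 < aa p j" "0 < aa p k" using aa_pos[OF p] by auto
  have "x \<notin> {aa p j .. 2 * aa p j}"
  proof (cases "j < k")
    case True
    have "2 * aa p j < RR p * aa p j" using R2 a by simp
    also have "\<dots> \<le> aa p k" by (rule aa_gap[OF p True])
    finally show ?thesis using x by auto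
  next
    case False
    then have kj: "k < j" using jk by simp
    have "2 * aa p k < RR p * aa p k" using R2 a by simp
    also have "\<dots> \<le> aa p j" by (rule aa_gap[OF p kj])
    finally show ?thesis using x by auto
  qed
  then show ?thesis by (simp add: eb_def)
qed

lemma fsum_single:
  assumes p: "1 < p" and k: "k < N" and x: "x \<in> {aa p k .. 2 * aa p k}"
  shows "fsum p c N x = c k * aa p k powr (-1/p)"
proof -
  have kin: "k \<in> {..<N}" using k by simp
  have "fsum p c N x = c k * eb p k x + (\<Sum>j\<in>{..<N} - {k}. c j * eb p j x)"
    unfolding fsum_def by (rule sum.remove[OF _ kin]) simp
  also have "(\<Sum>j\<in>{..<N} - {k}. c j * eb p j x) = 0"
    by (rule sum.neutral) (use eb_other[OF p x] in auto)
  also have "eb p k x = aa p k powr (-1/p)" using x by (simp add: eb_def)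
  finally show ?thesis by simp
qed

lemma fsum_meas: "fsum p c N \<in> borel_measurable pos_measure"
proof -
  have "fsum p c N \<in> borel_measurable lborel" unfolding fsum_def[abs_def] eb_def by measurable
  then show ?thesis unfolding pos_measure_def by (rule measurable_restrict_space1)
qed

lemma lsum_meas: "lsum p c N \<in> borel_measurable pos_measure"
proof -
  have "lsum p c N \<in> borel_measurable lborel" unfolding lsum_def[abs_def] phi_def by measurable
  then show ?thesis unfolding pos_measure_def by (rule measurable_restrict_space1)
qed

definition KX :: "real \<Rightarrow> real \<Rightarrow> real" where
  "KX p q = (1 / 2 powr (q/p) - 1 / RR p powr (q/p)) / (q/p)"

lemma X_lower:
  assumes p: "1 < p" and q: "1 < q"
  shows "ennreal (KX p q * (\<Sum>k<N. \<bar>c k\<bar> powr q)) \<le> lorentz_integral p q (fsum p c N)"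
proof -
  define R where "R = RR p"
  have R2: "2 < R" using RR_ge[OF p] by (simp add: R_def)
  have a: "\<And>k. 0 < aa p k" using aa_pos[OF p] by auto
  define J where "J k = {aa p k / R .. aa p k / 2}" for k
  define v where "v k = \<bar>c k\<bar> * aa p k powr (-1/p)" for k
  have "(\<Sum>k<N. \<integral>\<^sup>+ t. indicator (J k) t * ennreal ((t powr (1/p) * v k) powr q / t) \<partial>lborel)
       \<le> lorentz_integral p q (fsum p c N)"
  proof (rule lorentz_integral_lower)
    have d: "J j \<inter> J k = {}" if jk: "j < k" for j k
    proof -
      have "aa p j / 2 < aa p j" using a[of j] by simp
      also have "aa p j \<le> aa p k / R" using aa_gap[OF p jk] R2 by (simp add: R_def field_simps)
      finally have lt: "aa p j / 2 < aa p k / R" .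
      show ?thesis
      proof (rule equals0I)
        fix x assume "x \<in> J j \<inter> J k"
        then have "x \<le> aa p j / 2" "aa p k / R \<le> x" by (auto simp: J_def)
        with lt show False by linarith
      qed
    qed
    show "J j \<inter> J k = {}" if "j < N" "k < N" "j \<noteq> k" for j k
      using d[of j k] d[of k j] that by (cases "j < k") auto
    show "J k \<subseteq> {0<..}" for k using a[of k] R2 by (auto simp: J_def intro: less_le_trans[rotated])
    show "J k \<in> sets lborel" for k by (simp add: J_def)
    show "0 \<le> v k" for k by (simp add: v_def)
    show "0 < q" using q by simp
    fix k t assume k: "k < N" and t: "t \<in> J k"
    show "ennreal (v k) \<le> rearr (fsum p c N) t"
    proof (rule rearr_lower[OF fsum_meas])
      show "{aa p k .. 2 * aa p k} \<subseteq> {0<..}" using a[of k] by auto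
      show "v k \<le> \<bar>fsum p c N x\<bar>" if "x \<in> {aa p k .. 2 * aa p k}" for x
        using fsum_single[OF p k that] by (simp add: v_def abs_mult)
      have "t < aa p k" using t a[of k] by (auto simp: J_def)
      moreover have "0 < t" using t a[of k] R2 by (auto simp: J_def intro: less_le_trans[rotated])
      ultimately show "ennreal t < emeasure lborel {aa p k .. 2 * aa p k}"
        using a[of k] by (simp add: ennreal_lessI)
    qed
  qed
  also have "(\<Sum>k<N. \<integral>\<^sup>+ t. indicator (J k) t * ennreal ((t powr (1/p) * v k) powr q / t) \<partial>lborel)
      = (\<Sum>k<N. ennreal (\<bar>c k\<bar> powr q * KX p q))"
  proof (rule sum.cong[OF refl])
    fix k
    show "(\<integral>\<^sup>+ t. indicator (J k) t * ennreal ((t powr (1/p) * v k) powr q / t) \<partial>lborel) = ennreal (\<bar>c k\<bar> powr q * KX p q)"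
      unfolding J_def v_def KX_def R_def
      by (rule lower_term) (use a[of k] RR_ge[OF p] p q in auto)
  qed
  also have "\<dots> = ennreal (KX p q * (\<Sum>k<N. \<bar>c k\<bar> powr q))"
  proof -
    have "0 \<le> KX p q"
    proof -
      have "RR p powr (q/p) \<ge> 2 powr (q/p)" by (rule powr_mono2) (use RR_ge[OF p] p q in auto)
      moreover have "0 < RR p powr (q/p) * 2 powr (q/p)" using RR_pos[OF p] by simp
      ultimately have "1 / RR p powr (q/p) \<le> 1 / 2 powr (q/p)" by (intro divide_left_mono) auto
      then show ?thesis unfolding KX_def using p q by simp
    qed
    then show ?thesis by (subst sum_ennreal) (auto simp: sum_distrib_left mult.commute)
  qed
  finally show ?thesis .
qed



lemma exp_m2: "1/9 \<le> exp (-2::real)"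
proof -
  have "exp (2::real) = exp 1 * exp 1" by (simp add: exp_add[symmetric])
  also have "\<dots> \<le> 3 * 3" using exp_le by (intro mult_mono) auto
  finally have "exp (2::real) \<le> 9" by simp
  then show ?thesis by (simp add: exp_minus field_simps)
qed

lemma phi_off:
  assumes p: "1 < p" and x: "x \<in> {1 / (2 * aa p k) .. 1 / aa p k}" and jk: "j \<noteq> k"
  shows "phi p j x \<le> 2 * aa p k powr (1 - 1/p) * WW k j"
proof -
  define R where "R = RR p"
  have R0: "0 < R" using RR_pos[OF p] by (simp add: R_def)
  have ak: "0 < aa p k" by (rule aa_pos[OF p])
  have x0: "0 < x" using x ak by (auto intro: less_le_trans[rotated])
  have A: "aa p k powr (1 - 1/p) = R powr (real k * (1 - 1/p))"
    by (simp add: aa_powr[OF p] R_def powr_powr)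
  note pb = phi_bounds(2)[OF p x0, of j]
  show ?thesis
  proof (cases "j < k")
    case True
    define d where "d = real k - real j"
    have d0: "0 \<le> d" using True by (simp add: d_def)
    have "phi p j x \<le> aa p j powr (1 - 1/p)" using pb by simp
    also have "\<dots> = R powr (real j * (1 - 1/p))" by (simp add: aa_powr[OF p] R_def powr_powr)
    also have "real j * (1 - 1/p) = real k * (1 - 1/p) + (- ((1 - 1/p) * d))" by (simp add: d_def algebra_simps)
    also have "R powr (real k * (1 - 1/p) + (- ((1 - 1/p) * d))) = aa p k powr (1 - 1/p) * R powr (- ((1 - 1/p) * d))"
      by (simp only: powr_add A)
    also have "\<dots> \<le> aa p k powr (1 - 1/p) * 1000 powr (- d)"
      by (intro mult_left_mono) (use RR_powr_bound[OF p d0, of "1 - 1/p"] in \<open>auto simp: R_def\<close>)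
    also have "d = real (nat \<bar>int j - int k\<bar>)" using True by (simp add: d_def)
    also have "(1000::real) powr (- real (nat \<bar>int j - int k\<bar>)) = WW k j"
    proof -
      have "WW k j = (1/1000) ^ nat \<bar>int j - int k\<bar>" using jk by (simp add: WW_def)
      then show ?thesis by (simp only: thousand_powr_nat)
    qed
    finally have "phi p j x \<le> aa p k powr (1 - 1/p) * WW k j" .
    moreover have "0 \<le> aa p k powr (1 - 1/p) * WW k j" using WW_nonneg[of k j] by simp
    ultimately show ?thesis by linarith
  next
    case False
    then have kj: "k < j" using jk by simp
    define d where "d = real j - real k"
    have d0: "0 \<le> d" using kj by (simp add: d_def)
    have xi: "1 / x \<le> 2 * aa p k" using x x0 ak by (auto simp: field_simps)
    have "phi p j x \<le> aa p j powr (-1/p) / x" using pb by simp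
    also have "\<dots> = aa p j powr (-1/p) * (1 / x)" by simp
    also have "\<dots> \<le> aa p j powr (-1/p) * (2 * aa p k)" by (intro mult_left_mono xi) simp
    also have "aa p j powr (-1/p) * (2 * aa p k) = 2 * (R powr (- (real j / p)) * R powr (real k))"
      by (simp add: aa_powr[OF p] R_def powr_powr)
    also have "R powr (- (real j / p)) * R powr (real k) = R powr (real k * (1 - 1/p) + (- (1/p * d)))"
      by (simp add: powr_add[symmetric] d_def algebra_simps diff_divide_distrib)
    also have "\<dots> = aa p k powr (1 - 1/p) * R powr (- (1/p * d))"
      by (simp only: powr_add A)
    also have "2 * (aa p k powr (1 - 1/p) * R powr (- (1/p * d))) \<le> 2 * (aa p k powr (1 - 1/p) * 1000 powr (- d))"
      by (intro mult_left_mono) (use RR_powr_bound[OF p d0, of "1/p"] in \<open>auto simp: R_def\<close>)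
    also have "d = real (nat \<bar>int j - int k\<bar>)" using kj by (simp add: d_def)
    also have "(1000::real) powr (- real (nat \<bar>int j - int k\<bar>)) = WW k j"
    proof -
      have "WW k j = (1/1000) ^ nat \<bar>int j - int k\<bar>" using jk by (simp add: WW_def)
      then show ?thesis by (simp only: thousand_powr_nat)
    qed
    finally show ?thesis by (simp add: mult_ac)
  qed
qed

lemma Y_pointwise:
  assumes p: "1 < p" and k: "k < N" and x: "x \<in> {1 / (2 * aa p k) .. 1 / aa p k}"
  shows "aa p k powr (1 - 1/p) * (\<bar>c k\<bar> / 9 - 2 * (\<Sum>j<N. \<bar>c j\<bar> * WW k j)) \<le> \<bar>lsum p c N x\<bar>"
proof -
  define A where "A = aa p k powr (1 - 1/p)"
  have ak: "0 < aa p k" by (rule aa_pos[OF p])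
  have x0: "0 < x" using x ak by (auto intro: less_le_trans[rotated])
  have A0: "0 \<le> A" by (simp add: A_def)
  have kin: "k \<in> {..<N}" using k by simp
  have main: "A / 9 \<le> phi p k x"
  proof -
    have "aa p k * x \<le> 1" using x ak by (auto simp: field_simps)
    then have "exp (-2) \<le> exp (- (2 * aa p k * x))" by simp
    then have "1/9 \<le> exp (- (2 * aa p k * x))" using exp_m2 by linarith
    then have "A * (1/9) \<le> A * exp (- (2 * aa p k * x))" by (rule mult_left_mono[OF _ A0])
    also have "\<dots> \<le> phi p k x" unfolding A_def by (rule phi_bounds(3)[OF p x0])
    finally show ?thesis by simp
  qed
  have rest: "\<bar>\<Sum>j\<in>{..<N} - {k}. c j * phi p j x\<bar> \<le> 2 * A * (\<Sum>j<N. \<bar>c j\<bar> * WW k j)"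
  proof -
    have "\<bar>\<Sum>j\<in>{..<N} - {k}. c j * phi p j x\<bar> \<le> (\<Sum>j\<in>{..<N} - {k}. \<bar>c j * phi p j x\<bar>)" by (rule sum_abs)
    also have "\<dots> \<le> (\<Sum>j\<in>{..<N} - {k}. \<bar>c j\<bar> * (2 * A * WW k j))"
    proof (rule sum_mono)
      fix j assume "j \<in> {..<N} - {k}"
      then have jk: "j \<noteq> k" by simp
      have "\<bar>c j * phi p j x\<bar> = \<bar>c j\<bar> * phi p j x" using phi_bounds(1)[OF p x0, of j] by (simp add: abs_mult)
      also have "\<dots> \<le> \<bar>c j\<bar> * (2 * A * WW k j)"
        by (rule mult_left_mono) (use phi_off[OF p x jk] in \<open>auto simp: A_def\<close>)
      finally show "\<bar>c j * phi p j x\<bar> \<le> \<bar>c j\<bar> * (2 * A * WW k j)" .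
    qed
    also have "\<dots> = (\<Sum>j<N. \<bar>c j\<bar> * (2 * A * WW k j))"
      using sum.remove[OF _ kin, of "\<lambda>j. \<bar>c j\<bar> * (2 * A * WW k j)"] by (simp add: WW_def)
    also have "\<dots> = 2 * A * (\<Sum>j<N. \<bar>c j\<bar> * WW k j)" by (simp add: sum_distrib_left mult_ac)
    finally show ?thesis .
  qed
  have "lsum p c N x = c k * phi p k x + (\<Sum>j\<in>{..<N} - {k}. c j * phi p j x)"
    unfolding lsum_def by (rule sum.remove[OF _ kin]) simp
  then have "\<bar>c k\<bar> * phi p k x - \<bar>\<Sum>j\<in>{..<N} - {k}. c j * phi p j x\<bar> \<le> \<bar>lsum p c N x\<bar>"
    using phi_bounds(1)[OF p x0, of k] by (simp add: abs_mult)
  moreover have "\<bar>c k\<bar> * (A / 9) \<le> \<bar>c k\<bar> * phi p k x" by (rule mult_left_mono[OF main]) simp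
  ultimately have "\<bar>c k\<bar> * (A / 9) - 2 * A * (\<Sum>j<N. \<bar>c j\<bar> * WW k j) \<le> \<bar>lsum p c N x\<bar>"
    using rest by linarith
  then show ?thesis by (simp add: A_def algebra_simps)
qed



definition KYc :: "real \<Rightarrow> real \<Rightarrow> real" where
  "KYc p q = (1 / 2 powr (q / (p / (p - 1))) - 1 / RR p powr (q / (p / (p - 1)))) / (q / (p / (p - 1)))"
definition KY :: "real \<Rightarrow> real \<Rightarrow> real" where
  "KY p q = KYc p q / 2 powr ((1 - 1/p) * q) * 18 powr (- q)"

lemma KYc_nonneg: "1 < p \<Longrightarrow> 1 < q \<Longrightarrow> 0 \<le> KYc p q"
proof -
  assume p: "1 < p" and q: "1 < q"
  define \<alpha> where "\<alpha> = q / (p / (p - 1))"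
  have al: "0 < \<alpha>" using p q by (simp add: \<alpha>_def)
  have "RR p powr \<alpha> \<ge> 2 powr \<alpha>" by (rule powr_mono2) (use RR_ge[OF p] al in auto)
  moreover have "0 < RR p powr \<alpha> * 2 powr \<alpha>" using RR_pos[OF p] by simp
  ultimately have "1 / RR p powr \<alpha> \<le> 1 / 2 powr \<alpha>" by (intro divide_left_mono) auto
  then show ?thesis unfolding KYc_def \<alpha>_def[symmetric] using al by simp
qed

lemma Y_lower:
  assumes p: "1 < p" and q: "1 < q"
  shows "ennreal (KY p q * (\<Sum>k<N. \<bar>c k\<bar> powr q)) \<le> lorentz_integral (p / (p - 1)) q (lsum p c N)"
proof -
  define r where "r = p / (p - 1)"
  define \<beta> where "\<beta> = 1 - 1/p"
  have rb: "1 / r = \<beta>" unfolding r_def \<beta>_def by (rule inv_conj[OF p])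
  have r0: "0 < r" using p by (simp add: r_def)
  define R where "R = RR p"
  have R2: "2 < R" using RR_ge[OF p] by (simp add: R_def)
  have a: "\<And>k. 0 < aa p k" using aa_pos[OF p] by auto
  define E where "E k = 2 * (\<Sum>j<N. \<bar>c j\<bar> * WW k j)" for k
  define w where "w k = max 0 (\<bar>c k\<bar> / 9 - E k)" for k
  define u where "u k = w k / 2 powr \<beta>" for k
  define b where "b k = 1 / (2 * aa p k)" for k
  define J where "J k = {b k / R .. b k / 2}" for k
  define v where "v k = u k * b k powr (- 1 / r)" for k
  have b0: "0 < b k" for k using a[of k] by (simp add: b_def)
  have w0: "0 \<le> w k" for k by (simp add: w_def)
  have u0: "0 \<le> u k" for k using w0[of k] by (simp add: u_def)
  have v_eq: "v k = aa p k powr \<beta> * w k" for k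
  proof -
    have m: "- 1 / r = - \<beta>" using rb by simp
    have bb: "b k powr \<beta> = 1 / (2 * aa p k) powr \<beta>" by (simp add: b_def powr_divide)
    have "b k powr (- 1 / r) = inverse (b k powr \<beta>)" unfolding m by (rule powr_minus)
    also have "\<dots> = (2 * aa p k) powr \<beta>" unfolding bb by simp
    finally have "b k powr (- 1 / r) = (2 * aa p k) powr \<beta>" .
    also have "\<dots> = 2 powr \<beta> * aa p k powr \<beta>" by (rule powr_mult)
    finally show ?thesis by (simp add: v_def u_def)
  qed
  have "(\<Sum>k<N. \<integral>\<^sup>+ t. indicator (J k) t * ennreal ((t powr (1/r) * v k) powr q / t) \<partial>lborel)
       \<le> lorentz_integral r q (lsum p c N)"
  proof (rule lorentz_integral_lower)
    have d: "J j \<inter> J k = {}" if jk: "j < k" for j k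
    proof -
      have "b k / 2 < b k" using b0[of k] by simp
      also have "b k \<le> b j / R"
      proof -
        have "R * aa p j \<le> aa p k" using aa_gap[OF p jk] by (simp add: R_def)
        then have "2 * (R * aa p j) \<le> 2 * aa p k" by simp
        then have "1 / (2 * aa p k) \<le> 1 / (2 * (R * aa p j))"
          by (rule divide_left_mono) (use a[of j] a[of k] R2 in auto)
        then show ?thesis by (simp add: b_def field_simps)
      qed
      finally have lt: "b k / 2 < b j / R" .
      show ?thesis
      proof (rule equals0I)
        fix x assume "x \<in> J j \<inter> J k"
        then have "x \<le> b k / 2" "b j / R \<le> x" by (auto simp: J_def)
        with lt show False by linarith
      qed
    qed
    show "J j \<inter> J k = {}" if "j < N" "k < N" "j \<noteq> k" for j k
      using d[of j k] d[of k j] that by (cases "j < k") auto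
    show "J k \<subseteq> {0<..}" for k using b0[of k] R2 by (auto simp: J_def intro: less_le_trans[rotated])
    show "J k \<in> sets lborel" for k by (simp add: J_def)
    show "0 \<le> v k" for k using w0[of k] by (simp add: v_eq)
    show "0 < q" using q by simp
    fix k t assume k: "k < N" and t: "t \<in> J k"
    show "ennreal (v k) \<le> rearr (lsum p c N) t"
    proof (rule rearr_lower[OF lsum_meas])
      show "{1 / (2 * aa p k) .. 1 / aa p k} \<subseteq> {0<..}" using a[of k] by (auto intro: less_le_trans[rotated])
      show "v k \<le> \<bar>lsum p c N x\<bar>" if x: "x \<in> {1 / (2 * aa p k) .. 1 / aa p k}" for x
      proof (cases "w k = 0")
        case True
        then show ?thesis by (simp add: v_eq)
      next
        case False
        then have "w k = \<bar>c k\<bar> / 9 - E k" by (simp add: w_def)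
        then show ?thesis using Y_pointwise[OF p k x, of c] by (simp add: v_eq \<beta>_def E_def)
      qed
      have tb: "t < b k" using t b0[of k] by (auto simp: J_def)
      moreover have "0 < t" using t b0[of k] R2 by (auto simp: J_def intro: less_le_trans[rotated])
      moreover have "1 / aa p k - 1 / (2 * aa p k) = b k" using a[of k] by (simp add: b_def field_simps)
      moreover have "1 / (2 * aa p k) \<le> 1 / aa p k" using a[of k] by (simp add: field_simps)
      ultimately show "ennreal t < emeasure lborel {1 / (2 * aa p k) .. 1 / aa p k}"
        by (simp add: ennreal_lessI)
    qed
  qed
  also have "(\<Sum>k<N. \<integral>\<^sup>+ t. indicator (J k) t * ennreal ((t powr (1/r) * v k) powr q / t) \<partial>lborel)
      = (\<Sum>k<N. ennreal (u k powr q * KYc p q))"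
  proof (rule sum.cong[OF refl])
    fix k
    show "(\<integral>\<^sup>+ t. indicator (J k) t * ennreal ((t powr (1/r) * v k) powr q / t) \<partial>lborel) = ennreal (u k powr q * KYc p q)"
      unfolding J_def v_def KYc_def R_def r_def[symmetric]
      by (rule lower_term) (use b0[of k] RR_ge[OF p] u0[of k] r0 q in auto)
  qed
  also have "\<dots> = ennreal (KYc p q / 2 powr (\<beta> * q) * (\<Sum>k<N. w k powr q))"
  proof -
    have uq: "u k powr q = w k powr q / 2 powr (\<beta> * q)" for k
      by (simp add: u_def powr_divide powr_powr)
    have "(\<Sum>k<N. ennreal (u k powr q * KYc p q)) = ennreal (\<Sum>k<N. u k powr q * KYc p q)"
      by (rule sum_ennreal) (use KYc_nonneg[OF p q] in auto)
    also have "(\<Sum>k<N. u k powr q * KYc p q) = KYc p q / 2 powr (\<beta> * q) * (\<Sum>k<N. w k powr q)"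
      by (simp add: uq sum_distrib_left sum_divide_distrib mult_ac)
    finally show ?thesis .
  qed
  finally have main: "ennreal (KYc p q / 2 powr (\<beta> * q) * (\<Sum>k<N. w k powr q)) \<le> lorentz_integral r q (lsum p c N)" .
  have cl: "18 powr (- q) * (\<Sum>k<N. \<bar>c k\<bar> powr q) \<le> (\<Sum>k<N. w k powr q)"
    using comb_lower[OF q, of c N] by (simp add: w_def E_def)
  have "KY p q * (\<Sum>k<N. \<bar>c k\<bar> powr q) = KYc p q / 2 powr (\<beta> * q) * (18 powr (- q) * (\<Sum>k<N. \<bar>c k\<bar> powr q))"
    by (simp add: KY_def \<beta>_def)
  also have "\<dots> \<le> KYc p q / 2 powr (\<beta> * q) * (\<Sum>k<N. w k powr q)"
    by (rule mult_left_mono[OF cl]) (use KYc_nonneg[OF p q] in simp)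
  finally have "ennreal (KY p q * (\<Sum>k<N. \<bar>c k\<bar> powr q)) \<le> ennreal (KYc p q / 2 powr (\<beta> * q) * (\<Sum>k<N. w k powr q))"
    by (rule ennreal_leI)
  also note main
  finally show ?thesis by (simp add: r_def)
qed



definition Zs :: "real \<Rightarrow> (real \<Rightarrow> real) set" where
  "Zs p = {fsum p c N | c N. True}"

lemma Zs_subspace: "fun_subspace (Zs p)"
  unfolding fun_subspace_def
proof (intro conjI ballI allI)
  show "(\<lambda>x. 0) \<in> Zs p"
  proof -
    have "(\<lambda>x. 0) = fsum p (\<lambda>k. 0) 0" by (simp add: fsum_def[abs_def])
    then show ?thesis unfolding Zs_def by blast
  qed
next
  fix f g assume "f \<in> Zs p" "g \<in> Zs p"
  then obtain c N d M where f: "f = fsum p c N" and g: "g = fsum p d M" unfolding Zs_def by blast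
  define e where "e k = (if k < N then c k else 0) + (if k < M then d k else 0)" for k
  have "(\<lambda>x. f x + g x) = fsum p e (N + M)"
  proof
    fix x
    have "fsum p e (N + M) x = (\<Sum>k<N + M. (if k < N then c k * eb p k x else 0)) + (\<Sum>k<N + M. (if k < M then d k * eb p k x else 0))"
    proof -
      have "fsum p e (N + M) x = (\<Sum>k<N + M. (if k < N then c k * eb p k x else 0) + (if k < M then d k * eb p k x else 0))"
        unfolding fsum_def e_def by (rule sum.cong) (auto simp: distrib_right)
      then show ?thesis by (simp add: sum.distrib)
    qed
    also have "(\<Sum>k<N + M. (if k < N then c k * eb p k x else 0)) = (\<Sum>k<N. c k * eb p k x)"
      by (rule sum.mono_neutral_cong_right) auto
    also have "(\<Sum>k<N + M. (if k < M then d k * eb p k x else 0)) = (\<Sum>k<M. d k * eb p k x)"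
      by (rule sum.mono_neutral_cong_right) auto
    finally show "f x + g x = fsum p e (N + M) x" by (simp add: f g fsum_def)
  qed
  then show "(\<lambda>x. f x + g x) \<in> Zs p" unfolding Zs_def by blast
next
  fix a :: real and f assume "f \<in> Zs p"
  then obtain c N where f: "f = fsum p c N" unfolding Zs_def by blast
  have "(\<lambda>x. a * f x) = fsum p (\<lambda>k. a * c k) N"
    by (simp add: f fsum_def[abs_def] sum_distrib_left mult.assoc)
  then show "(\<lambda>x. a * f x) \<in> Zs p" unfolding Zs_def by blast
qed

lemma Zs_infdim:
  assumes p: "1 < p"
  shows "infinite_dim_ae (Zs p)"
  unfolding infinite_dim_ae_def
proof (intro allI)
  fix n :: nat
  define fs where "fs i = fsum p (\<lambda>k. if k = i then 1 else 0) (Suc i)" for i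
  have fs_eq: "fs i x = eb p i x" for i x
  proof -
    have "fs i x = (\<Sum>k<Suc i. (if k = i then 1 else 0) * eb p k x)" by (simp add: fs_def fsum_def)
    also have "\<dots> = (\<Sum>k<Suc i. (if k = i then eb p k x else 0))" by (rule sum.cong) auto
    also have "\<dots> = eb p i x" by (simp add: sum.delta)
    finally show ?thesis .
  qed
  show "\<exists>fs. (\<forall>i<n. fs i \<in> Zs p) \<and> (\<forall>c. (AE x in pos_measure. (\<Sum>i<n. c i * fs i x) = 0) \<longrightarrow> (\<forall>i<n. c i = 0))"
  proof (intro exI conjI allI impI)
    show "fs i \<in> Zs p" if "i < n" for i unfolding Zs_def fs_def by blast
    fix c :: "nat \<Rightarrow> real" and i assume AE: "AE x in pos_measure. (\<Sum>i<n. c i * fs i x) = 0" and i: "i < n"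
    show "c i = 0"
    proof (rule ccontr)
      assume ci: "c i \<noteq> 0"
      define A where "A = {aa p i .. 2 * aa p i}"
      have ai: "0 < aa p i" by (rule aa_pos[OF p])
      have A0: "A \<subseteq> {0<..}" using ai by (auto simp: A_def)
      have "AE x in pos_measure. x \<notin> A"
        using AE
      proof (rule eventually_mono)
        fix x assume z: "(\<Sum>i<n. c i * fs i x) = 0"
        show "x \<notin> A"
        proof
          assume xA: "x \<in> A"
          have "(\<Sum>i<n. c i * fs i x) = fsum p c n x" by (simp add: fs_eq fsum_def)
          also have "\<dots> = c i * aa p i powr (-1/p)" by (rule fsum_single[OF p i]) (use xA in \<open>simp add: A_def\<close>)
          finally show False using z ci ai by simp
        qed
      qed
      moreover have "A \<in> sets pos_measure"
        unfolding pos_measure_def using A0 by (simp add: sets_restrict_space_iff A_def)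
      moreover have "{x \<in> space pos_measure. \<not> x \<notin> A} = A" using A0 by auto
      ultimately have "emeasure pos_measure A = 0" by (simp add: AE_iff_measurable)
      moreover have "emeasure pos_measure A = emeasure lborel A"
        unfolding pos_measure_def by (rule emeasure_restrict_space) (use A0 in auto)
      moreover have "emeasure lborel A = ennreal (aa p i)" using ai by (simp add: A_def)
      ultimately show False using ai by simp
    qed
  qed
qed



lemma KX_pos: assumes p: "1 < p" and q: "1 < q" shows "0 < KX p q"
proof -
  define \<alpha> where "\<alpha> = q / p"
  have al: "0 < \<alpha>" using p q by (simp add: \<alpha>_def)
  have "2 powr \<alpha> < RR p powr \<alpha>" by (rule powr_less_mono2) (use RR_ge[OF p] al in auto)
  then have "1 / RR p powr \<alpha> < 1 / 2 powr \<alpha>" by (intro divide_strict_left_mono) (use RR_pos[OF p] in auto)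
  then show ?thesis unfolding KX_def \<alpha>_def[symmetric] using al by simp
qed

lemma KY_pos: assumes p: "1 < p" and q: "1 < q" shows "0 < KY p q"
proof -
  define \<alpha> where "\<alpha> = q / (p / (p - 1))"
  have al: "0 < \<alpha>" using p q by (simp add: \<alpha>_def)
  have "2 powr \<alpha> < RR p powr \<alpha>" by (rule powr_less_mono2) (use RR_ge[OF p] al in auto)
  then have "1 / RR p powr \<alpha> < 1 / 2 powr \<alpha>" by (intro divide_strict_left_mono) (use RR_pos[OF p] in auto)
  then have "0 < KYc p q" unfolding KYc_def \<alpha>_def[symmetric] using al by simp
  then show ?thesis by (simp add: KY_def)
qed

lemma fsum_bounds:
  assumes p: "1 < p" and q: "1 < q"
  shows "fsum p c N \<in> lorentz_space p q"
    "laplace (fsum p c N) \<in> lorentz_space (p / (p - 1)) q"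
    "KX p q * (\<Sum>k<N. \<bar>c k\<bar> powr q) \<le> enn2real (lorentz_integral p q (fsum p c N))"
    "enn2real (lorentz_integral p q (fsum p c N)) \<le> GXc powr (q - 1) * GamX p * (\<Sum>k<N. \<bar>c k\<bar> powr q)"
    "KY p q * (\<Sum>k<N. \<bar>c k\<bar> powr q) \<le> enn2real (lorentz_integral (p / (p - 1)) q (laplace (fsum p c N)))"
    "enn2real (lorentz_integral (p / (p - 1)) q (laplace (fsum p c N))) \<le> GYc powr (q - 1) * GamY p * (\<Sum>k<N. \<bar>c k\<bar> powr q)"
proof -
  have S0: "0 \<le> (\<Sum>k<N. \<bar>c k\<bar> powr q)" by (simp add: sum_nonneg)
  have lap: "laplace (fsum p c N) t = lsum p c N t" if "0 < t" for t
    unfolding fsum_def[abs_def] lsum_def by (rule laplace_sum[OF p that])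
  have LC1: "lorentz_integral r' q' (laplace (fsum p c N)) = lorentz_integral r' q' (lsum p c N)" for r' q'
    by (rule lorentz_cong(1)) (rule lap)
  have LC3: "laplace (fsum p c N) \<in> lorentz_space r' q' \<longleftrightarrow> lsum p c N \<in> lorentz_space r' q'" for r' q'
    by (rule lorentz_cong(3)) (rule lap)
  have XU: "lorentz_integral p q (fsum p c N) \<le> ennreal (GXc powr (q - 1) * GamX p * (\<Sum>k<N. \<bar>c k\<bar> powr q))"
    by (rule X_upper[OF p q])
  have YU: "lorentz_integral (p / (p - 1)) q (laplace (fsum p c N)) \<le> ennreal (GYc powr (q - 1) * GamY p * (\<Sum>k<N. \<bar>c k\<bar> powr q))"
    unfolding LC1 by (rule Y_upper[OF p q])
  have XL: "ennreal (KX p q * (\<Sum>k<N. \<bar>c k\<bar> powr q)) \<le> lorentz_integral p q (fsum p c N)"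
    by (rule X_lower[OF p q])
  have YL: "ennreal (KY p q * (\<Sum>k<N. \<bar>c k\<bar> powr q)) \<le> lorentz_integral (p / (p - 1)) q (laplace (fsum p c N))"
    unfolding LC1 by (rule Y_lower[OF p q])
  have XF: "lorentz_integral p q (fsum p c N) < top" using XU by (rule le_less_trans) simp
  have YF: "lorentz_integral (p / (p - 1)) q (laplace (fsum p c N)) < top" using YU by (rule le_less_trans) simp
  show "fsum p c N \<in> lorentz_space p q" unfolding lorentz_space_def using fsum_meas XF by simp
  show "laplace (fsum p c N) \<in> lorentz_space (p / (p - 1)) q"
    unfolding LC3 using lsum_meas YF[unfolded LC1] by (simp add: lorentz_space_def)
  have KX0: "0 \<le> KX p q * (\<Sum>k<N. \<bar>c k\<bar> powr q)" using KX_pos[OF p q] S0 by simp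
  have KY0: "0 \<le> KY p q * (\<Sum>k<N. \<bar>c k\<bar> powr q)" using KY_pos[OF p q] S0 by simp
  have "enn2real (ennreal (KX p q * (\<Sum>k<N. \<bar>c k\<bar> powr q))) \<le> enn2real (lorentz_integral p q (fsum p c N))"
    by (rule enn2real_mono[OF XL XF])
  then show "KX p q * (\<Sum>k<N. \<bar>c k\<bar> powr q) \<le> enn2real (lorentz_integral p q (fsum p c N))" using KX0 by simp
  have "enn2real (lorentz_integral p q (fsum p c N)) \<le> enn2real (ennreal (GXc powr (q - 1) * GamX p * (\<Sum>k<N. \<bar>c k\<bar> powr q)))"
    by (rule enn2real_mono[OF XU]) simp
  moreover have "0 \<le> GXc powr (q - 1) * GamX p * (\<Sum>k<N. \<bar>c k\<bar> powr q)" using S0 p by (simp add: GamX_def)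
  ultimately show "enn2real (lorentz_integral p q (fsum p c N)) \<le> GXc powr (q - 1) * GamX p * (\<Sum>k<N. \<bar>c k\<bar> powr q)" by simp
  have "enn2real (ennreal (KY p q * (\<Sum>k<N. \<bar>c k\<bar> powr q))) \<le> enn2real (lorentz_integral (p / (p - 1)) q (laplace (fsum p c N)))"
    by (rule enn2real_mono[OF YL YF])
  then show "KY p q * (\<Sum>k<N. \<bar>c k\<bar> powr q) \<le> enn2real (lorentz_integral (p / (p - 1)) q (laplace (fsum p c N)))" using KY0 by simp
  have "enn2real (lorentz_integral (p / (p - 1)) q (laplace (fsum p c N))) \<le> enn2real (ennreal (GYc powr (q - 1) * GamY p * (\<Sum>k<N. \<bar>c k\<bar> powr q)))"
    by (rule enn2real_mono[OF YU]) simp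
  moreover have "0 \<le> GamY p" using p by (simp add: GamY_def field_simps)
  then have "0 \<le> GYc powr (q - 1) * GamY p * (\<Sum>k<N. \<bar>c k\<bar> powr q)" using S0 by simp
  ultimately show "enn2real (lorentz_integral (p / (p - 1)) q (laplace (fsum p c N))) \<le> GYc powr (q - 1) * GamY p * (\<Sum>k<N. \<bar>c k\<bar> powr q)" by simp
qed

theorem theorem2:
  fixes p q :: real
  assumes "1 < p" and "1 < q"
  shows "\<not> strictly_singular (lorentz_space p q) (lorentz_norm p q)
            (lorentz_space (p / (p - 1)) q) (lorentz_norm (p / (p - 1)) q) laplace"
proof -
  note p = assms(1) and q = assms(2)
  define UX where "UX = GXc powr (q - 1) * GamX p"
  define UY where "UY = GYc powr (q - 1) * GamY p"
  define LX where "LX = KX p q"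
  define LY where "LY = KY p q"
  have UX0: "0 < UX" using p by (simp add: UX_def GXc_def GamX_def)
  have LX0: "0 < LX" using KX_pos[OF p q] by (simp add: LX_def)
  have LY0: "0 < LY" using KY_pos[OF p q] by (simp add: LY_def)
  have q0: "0 \<le> 1 / q" using q by simp
  define c0 where "c0 = (LY / UX) powr (1 / q)"
  define C0 where "C0 = (UY / LX) powr (1 / q)"
  have c0: "0 < c0" using LY0 UX0 by (simp add: c0_def)
  have main: "c0 * lorentz_norm p q f \<le> lorentz_norm (p / (p - 1)) q (laplace f) \<and>
      lorentz_norm (p / (p - 1)) q (laplace f) \<le> C0 * lorentz_norm p q f" if f: "f \<in> Zs p" for f
  proof -
    obtain c N where fe: "f = fsum p c N" using f unfolding Zs_def by blast
    define S where "S = (\<Sum>k<N. \<bar>c k\<bar> powr q)"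
    define x where "x = enn2real (lorentz_integral p q f)"
    define y where "y = enn2real (lorentz_integral (p / (p - 1)) q (laplace f))"
    note B0 = fsum_bounds[OF p q, of c N, folded fe S_def UX_def UY_def LX_def LY_def]
    have B3: "LX * S \<le> x" and B4: "x \<le> UX * S" and B5: "LY * S \<le> y" and B6: "y \<le> UY * S"
      using B0(3-6) by (simp_all add: x_def y_def)
    have x0: "0 \<le> x" by (simp add: x_def)
    have nx: "lorentz_norm p q f = x powr (1 / q)" by (simp add: lorentz_norm_def x_def)
    have ny: "lorentz_norm (p / (p - 1)) q (laplace f) = y powr (1 / q)" by (simp add: lorentz_norm_def y_def)
    have "c0 * x powr (1 / q) = (LY / UX * x) powr (1 / q)" by (simp only: c0_def powr_mult)
    also have "\<dots> \<le> y powr (1 / q)"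
    proof (rule powr_mono2[OF q0])
      show "0 \<le> LY / UX * x" using LY0 UX0 x0 by simp
      have "LY / UX * x \<le> LY / UX * (UX * S)" by (rule mult_left_mono) (use B4 LY0 UX0 in auto)
      also have "\<dots> = LY * S" using UX0 by simp
      also have "\<dots> \<le> y" by (rule B5)
      finally show "LY / UX * x \<le> y" .
    qed
    finally have 1: "c0 * lorentz_norm p q f \<le> lorentz_norm (p / (p - 1)) q (laplace f)" unfolding nx ny .
    have "y powr (1 / q) \<le> (UY / LX * x) powr (1 / q)"
    proof (rule powr_mono2[OF q0])
      show "0 \<le> y" by (simp add: y_def)
      have "y \<le> UY * S" by (rule B6)
      also have "\<dots> = UY / LX * (LX * S)" using LX0 by simp
      also have "\<dots> \<le> UY / LX * x"
        by (rule mult_left_mono[OF B3]) (use LX0 p in \<open>simp add: UY_def GamY_def field_simps\<close>)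
      finally show "y \<le> UY / LX * x" .
    qed
    also have "\<dots> = C0 * x powr (1 / q)" by (simp only: C0_def powr_mult)
    finally have 2: "lorentz_norm (p / (p - 1)) q (laplace f) \<le> C0 * lorentz_norm p q f" unfolding nx ny .
    from 1 2 show ?thesis ..
  qed
  have "\<exists>Z. Z \<subseteq> lorentz_space p q \<and> fun_subspace Z \<and> infinite_dim_ae Z \<and>
      (\<forall>f\<in>Z. laplace f \<in> lorentz_space (p / (p - 1)) q) \<and>
      (\<exists>c>0. \<exists>C. \<forall>f\<in>Z. c * lorentz_norm p q f \<le> lorentz_norm (p / (p - 1)) q (laplace f) \<and>
          lorentz_norm (p / (p - 1)) q (laplace f) \<le> C * lorentz_norm p q f)"
  proof (rule exI[of _ "Zs p"], intro conjI)
    show "Zs p \<subseteq> lorentz_space p q" using fsum_bounds(1)[OF p q] by (auto simp: Zs_def)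
    show "fun_subspace (Zs p)" by (rule Zs_subspace)
    show "infinite_dim_ae (Zs p)" by (rule Zs_infdim[OF p])
    show "\<forall>f\<in>Zs p. laplace f \<in> lorentz_space (p / (p - 1)) q" using fsum_bounds(2)[OF p q] by (auto simp: Zs_def)
    show "\<exists>c>0. \<exists>C. \<forall>f\<in>Zs p. c * lorentz_norm p q f \<le> lorentz_norm (p / (p - 1)) q (laplace f) \<and>
          lorentz_norm (p / (p - 1)) q (laplace f) \<le> C * lorentz_norm p q f"
      using c0 main by blast
  qed
  then show ?thesis unfolding strictly_singular_def by blast
qed


end
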